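(* Let $(W,+)$ be a commutative group with subgroups $F\le B\le W$, where $F=\{0,1\}$ has order $2$ (so $1$ denotes an element of order $2$ of $W$, and $F$ is identified with the field with two elements). Suppose that $\overline W=W/B$ is an elementary abelian $2$-group, regarded as a vector space over $F$. Let $\overline q:\overline W\to F$ be a quadratic form with associated bilinear form $\overline h:\overline W\times\overline W\to F$, $\overline h(\overline u,\overline v)=\overline q(\overline u+\overline v)-\overline q(\overline u)-\overline q(\overline v)$. Define $q:W\to F$ and $h:W\times W\to F$ by $q(u)=\overline q(u+B)$ and $h(u,v)=\overline h(u+B,v+B)$. Let $Q=\mathcal Q(F,B,W,\overline q)$ be the magma on $F\times W$ with multiplication $$(i,u)\cdot(j,v)=(i+j,\ u+v+jq(u)+ih(u,v)),$$ where $i+j$ and the products $jq(u)$, $ih(u,v)$ are computed in the field $F$ and then regarded as elements of $F\subseteq W$. Then: (i) $Q$ is a centrally nilpotent loop, and it is a central extension of the commutative group $B$ by the elementary abelian $2$-group $F\times\overline W$; (ii) $Q$ is congruence solvable and hence classically solvable; (iii) $Q$ is an extra loop; (iv) $Q$ is a group if and only if the quadratic form $\overline q$ is linear; (v) $X=0\times W$ is an abelian normal subloop of $Q$ (i.e. a normal subloop that is a commutative group); (vi) if $Q$ is not a group, then the congruence of $Q$ induced by $X$ is not abelian.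
   Context: A loop is a magma $(Q,\cdot,1)$ with two-sided identity $1$ in which all left and right translations $y\mapsto xy$, $y\mapsto yx$ are bijections. A subloop is normal if it is the kernel of a loop homomorphism. The nucleus $\mathrm{Nuc}(Q)$ is the set of $x$ with $x(yz)=(xy)z$, $y(xz)=(yx)z$, $y(zx)=(yz)x$ for all $y,z$; the center $Z(Q)$ consists of nuclear elements commuting with all elements. Given a commutative group $(X,+,0)$, a loop $F'$ and $\theta:F'\times F'\to X$ with $\theta_{1,r}=0=\theta_{r,1}$, the loop on $F'\times X$ with $(r,x)(s,y)=(rs,x+y+\theta_{r,s})$ is a central extension of $X$ by $F'$. A loop is centrally nilpotent if it has a series $Q=Q_0\ge Q_1\ge\dots\ge Q_n=1$ of normal subloops of $Q$ with $Q_i/Q_{i+1}\le Z(Q/Q_{i+1})$. A quadratic form on a vector space $V$ over a field $K$ is a map $q:V\to K$ with $q(\lambda u)=\lambda^2q(u)$ such that $(u,v)\mapsto q(u+v)-q(u)-q(v)$ is bilinear. An extra loop is a loop satisfying $x(y\cdot zx)=(xy\cdot z)x$. For a normal subloop $X$ of a loop $Q$, the induced congruence $\alpha_X$ has classes $\{aX\}$; $X$ induces an abelian congruence (is abelian in $Q$) if $[\alpha_X,\alpha_X]_Q$ is the trivial congruence in the Freese–McKenzie commutator theory of congruence modular varieties; equivalently, $Q$ is isomorphic to an abelian extension of $X$ by $Q/X$, i.e. a loop on $Q/X\times X$ with $(r,x)(s,y)=(rs,\varphi_{r,s}(x)+\psi_{r,s}(y)+\theta_{r,s})$ where $\varphi_{r,s},\psi_{r,s}\in\mathrm{Aut}(X)$,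 $\theta_{r,s}\in X$, $\varphi_{r,1}=\mathrm{id}=\psi_{1,r}$, $\theta_{1,r}=0=\theta_{r,1}$. A loop is classically solvable if it has a series $Q=Q_0\ge\dots\ge Q_n=1$ of normal subloops of $Q$ with each $Q_i/Q_{i+1}$ a commutative group; it is congruence solvable if it has such a series with each $Q_i/Q_{i+1}$ inducing an abelian congruence of $Q/Q_{i+1}$. *)

theory Defs
  imports Main
begin

definition loop :: "'a set \<Rightarrow> ('a \<Rightarrow> 'a \<Rightarrow> 'a) \<Rightarrow> 'a \<Rightarrow> bool" where
  "loop S m u \<longleftrightarrow> u \<in> S \<and> (\<forall>x\<in>S. \<forall>y\<in>S. m x y \<in> S)
     \<and> (\<forall>x\<in>S. m u x = x \<and> m x u = x)
     \<and> (\<forall>x\<in>S. bij_betw (m x) S S \<and> bij_betw (\<lambda>y. m y x) S S)"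

definition is_group :: "'a set \<Rightarrow> ('a \<Rightarrow> 'a \<Rightarrow> 'a) \<Rightarrow> 'a \<Rightarrow> bool" where
  "is_group S m u \<longleftrightarrow> loop S m u
     \<and> (\<forall>x\<in>S. \<forall>y\<in>S. \<forall>z\<in>S. m x (m y z) = m (m x y) z)"

definition is_comm_group :: "'a set \<Rightarrow> ('a \<Rightarrow> 'a \<Rightarrow> 'a) \<Rightarrow> 'a \<Rightarrow> bool" where
  "is_comm_group S m u \<longleftrightarrow> is_group S m u \<and> (\<forall>x\<in>S. \<forall>y\<in>S. m x y = m y x)"

definition loop_hom :: "'a set \<Rightarrow> ('a \<Rightarrow> 'a \<Rightarrow> 'a) \<Rightarrow> 'b set \<Rightarrow> ('b \<Rightarrow> 'b \<Rightarrow> 'b) \<Rightarrow> ('a \<Rightarrow> 'b) \<Rightarrow> bool" where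
  "loop_hom S m T m' f \<longleftrightarrow> (\<forall>x\<in>S. f x \<in> T) \<and> (\<forall>x\<in>S. \<forall>y\<in>S. f (m x y) = m' (f x) (f y))"

definition loop_iso :: "'a set \<Rightarrow> ('a \<Rightarrow> 'a \<Rightarrow> 'a) \<Rightarrow> 'b set \<Rightarrow> ('b \<Rightarrow> 'b \<Rightarrow> 'b) \<Rightarrow> ('a \<Rightarrow> 'b) \<Rightarrow> bool" where
  "loop_iso S m T m' f \<longleftrightarrow> loop_hom S m T m' f \<and> bij_betw f S T"

text \<open>Normal subloop = kernel of a loop homomorphism. Every homomorphic image of a loop on
  type 'a is isomorphic to a loop on cosets, i.e. on type 'a set, so codomains of that type suffice.\<close>
definition normal_subloop :: "'a set \<Rightarrow> ('a \<Rightarrow> 'a \<Rightarrow> 'a) \<Rightarrow> 'a \<Rightarrow> 'a set \<Rightarrow> bool" where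
  "normal_subloop S m u N \<longleftrightarrow>
     (\<exists>(T::'a set set) m' u' f. loop T m' u' \<and> loop_hom S m T m' f \<and> N = {x\<in>S. f x = u'})"

definition nucleus :: "'a set \<Rightarrow> ('a \<Rightarrow> 'a \<Rightarrow> 'a) \<Rightarrow> 'a set" where
  "nucleus S m = {x\<in>S. \<forall>y\<in>S. \<forall>z\<in>S. m x (m y z) = m (m x y) z
                        \<and> m y (m x z) = m (m y x) z \<and> m y (m z x) = m (m y z) x}"

definition center :: "'a set \<Rightarrow> ('a \<Rightarrow> 'a \<Rightarrow> 'a) \<Rightarrow> 'a set" where
  "center S m = {x\<in>nucleus S m. \<forall>y\<in>S. m x y = m y x}"

definition extra_loop :: "'a set \<Rightarrow> ('a \<Rightarrow> 'a \<Rightarrow> 'a) \<Rightarrow> 'a \<Rightarrow> bool" where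
  "extra_loop S m u \<longleftrightarrow> loop S m u
     \<and> (\<forall>x\<in>S. \<forall>y\<in>S. \<forall>z\<in>S. m x (m y (m z x)) = m (m (m x y) z) x)"

definition lcoset :: "('a \<Rightarrow> 'a \<Rightarrow> 'a) \<Rightarrow> 'a \<Rightarrow> 'a set \<Rightarrow> 'a set" where
  "lcoset m x N = (\<lambda>n. m x n) ` N"

definition qcar :: "'a set \<Rightarrow> ('a \<Rightarrow> 'a \<Rightarrow> 'a) \<Rightarrow> 'a set \<Rightarrow> 'a set set" where
  "qcar S m N = (\<lambda>x. lcoset m x N) ` S"

definition qmul :: "('a \<Rightarrow> 'a \<Rightarrow> 'a) \<Rightarrow> 'a set \<Rightarrow> 'a set \<Rightarrow> 'a set \<Rightarrow> 'a set" where
  "qmul m N A C = lcoset m (m (SOME a. a \<in> A) (SOME c. c \<in> C)) N"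

definition subquot :: "('a \<Rightarrow> 'a \<Rightarrow> 'a) \<Rightarrow> 'a set \<Rightarrow> 'a set \<Rightarrow> 'a set set" where
  "subquot m M N = (\<lambda>x. lcoset m x N) ` M"

definition ldiv :: "'a set \<Rightarrow> ('a \<Rightarrow> 'a \<Rightarrow> 'a) \<Rightarrow> 'a \<Rightarrow> 'a \<Rightarrow> 'a" where
  "ldiv S m x z = (THE y. y \<in> S \<and> m x y = z)"

definition rdiv :: "'a set \<Rightarrow> ('a \<Rightarrow> 'a \<Rightarrow> 'a) \<Rightarrow> 'a \<Rightarrow> 'a \<Rightarrow> 'a" where
  "rdiv S m z y = (THE x. x \<in> S \<and> m x y = z)"

definition loop_congruence :: "'a set \<Rightarrow> ('a \<Rightarrow> 'a \<Rightarrow> 'a) \<Rightarrow> ('a \<times> 'a) set \<Rightarrow> bool" where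
  "loop_congruence S m \<theta> \<longleftrightarrow> equiv S \<theta> \<and>
     (\<forall>a b c d. (a, b) \<in> \<theta> \<longrightarrow> (c, d) \<in> \<theta> \<longrightarrow>
        (m a c, m b d) \<in> \<theta> \<and> (ldiv S m a c, ldiv S m b d) \<in> \<theta> \<and> (rdiv S m a c, rdiv S m b d) \<in> \<theta>)"

inductive_set loop_terms :: "'a set \<Rightarrow> ('a \<Rightarrow> 'a \<Rightarrow> 'a) \<Rightarrow> 'a
    \<Rightarrow> ((nat \<Rightarrow> 'a) \<Rightarrow> (nat \<Rightarrow> 'a) \<Rightarrow> 'a) set"
  for S m u where
  proj1: "(\<lambda>x y. x i) \<in> loop_terms S m u"
| proj2: "(\<lambda>x y. y i) \<in> loop_terms S m u"
| unit: "(\<lambda>x y. u) \<in> loop_terms S m u"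
| mul: "t1 \<in> loop_terms S m u \<Longrightarrow> t2 \<in> loop_terms S m u \<Longrightarrow>
          (\<lambda>x y. m (t1 x y) (t2 x y)) \<in> loop_terms S m u"
| ld: "t1 \<in> loop_terms S m u \<Longrightarrow> t2 \<in> loop_terms S m u \<Longrightarrow>
          (\<lambda>x y. ldiv S m (t1 x y) (t2 x y)) \<in> loop_terms S m u"
| rd: "t1 \<in> loop_terms S m u \<Longrightarrow> t2 \<in> loop_terms S m u \<Longrightarrow>
          (\<lambda>x y. rdiv S m (t1 x y) (t2 x y)) \<in> loop_terms S m u"

definition centralizes :: "'a set \<Rightarrow> ('a \<Rightarrow> 'a \<Rightarrow> 'a) \<Rightarrow> 'a
    \<Rightarrow> ('a \<times> 'a) set \<Rightarrow> ('a \<times> 'a) set \<Rightarrow> ('a \<times> 'a) set \<Rightarrow> bool" where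
  "centralizes S m u \<alpha> \<beta> \<delta> \<longleftrightarrow>
     (\<forall>t\<in>loop_terms S m u. \<forall>a b c d.
        (\<forall>i. a i \<in> S \<and> b i \<in> S \<and> c i \<in> S \<and> d i \<in> S \<and> (a i, b i) \<in> \<alpha> \<and> (c i, d i) \<in> \<beta>) \<longrightarrow>
        (t a c, t a d) \<in> \<delta> \<longrightarrow> (t b c, t b d) \<in> \<delta>)"

definition commutator :: "'a set \<Rightarrow> ('a \<Rightarrow> 'a \<Rightarrow> 'a) \<Rightarrow> 'a
    \<Rightarrow> ('a \<times> 'a) set \<Rightarrow> ('a \<times> 'a) set \<Rightarrow> ('a \<times> 'a) set" where
  "commutator S m u \<alpha> \<beta> = \<Inter>{\<delta>. loop_congruence S m \<delta> \<and> centralizes S m u \<alpha> \<beta> \<delta>}"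

definition abelian_congruence :: "'a set \<Rightarrow> ('a \<Rightarrow> 'a \<Rightarrow> 'a) \<Rightarrow> 'a \<Rightarrow> ('a \<times> 'a) set \<Rightarrow> bool" where
  "abelian_congruence S m u \<alpha> \<longleftrightarrow> commutator S m u \<alpha> \<alpha> = Id_on S"

definition induced_cong :: "'a set \<Rightarrow> ('a \<Rightarrow> 'a \<Rightarrow> 'a) \<Rightarrow> 'a set \<Rightarrow> ('a \<times> 'a) set" where
  "induced_cong S m X = {(a, b). a \<in> S \<and> b \<in> S \<and> lcoset m a X = lcoset m b X}"

definition centrally_nilpotent :: "'a set \<Rightarrow> ('a \<Rightarrow> 'a \<Rightarrow> 'a) \<Rightarrow> 'a \<Rightarrow> bool" where
  "centrally_nilpotent S m u \<longleftrightarrow> loop S m u \<and>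
     (\<exists>(Qs :: nat \<Rightarrow> 'a set) n. Qs 0 = S \<and> Qs n = {u}
        \<and> (\<forall>i\<le>n. normal_subloop S m u (Qs i))
        \<and> (\<forall>i<n. Qs (Suc i) \<subseteq> Qs i
              \<and> subquot m (Qs i) (Qs (Suc i)) \<subseteq> center (qcar S m (Qs (Suc i))) (qmul m (Qs (Suc i)))))"

definition classically_solvable :: "'a set \<Rightarrow> ('a \<Rightarrow> 'a \<Rightarrow> 'a) \<Rightarrow> 'a \<Rightarrow> bool" where
  "classically_solvable S m u \<longleftrightarrow> loop S m u \<and>
     (\<exists>(Qs :: nat \<Rightarrow> 'a set) n. Qs 0 = S \<and> Qs n = {u}
        \<and> (\<forall>i\<le>n. normal_subloop S m u (Qs i))
        \<and> (\<forall>i<n. Qs (Suc i) \<subseteq> Qs i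
              \<and> is_comm_group (subquot m (Qs i) (Qs (Suc i))) (qmul m (Qs (Suc i))) (Qs (Suc i))))"

definition congruence_solvable :: "'a set \<Rightarrow> ('a \<Rightarrow> 'a \<Rightarrow> 'a) \<Rightarrow> 'a \<Rightarrow> bool" where
  "congruence_solvable S m u \<longleftrightarrow> loop S m u \<and>
     (\<exists>(Qs :: nat \<Rightarrow> 'a set) n. Qs 0 = S \<and> Qs n = {u}
        \<and> (\<forall>i\<le>n. normal_subloop S m u (Qs i))
        \<and> (\<forall>i<n. Qs (Suc i) \<subseteq> Qs i
              \<and> abelian_congruence (qcar S m (Qs (Suc i))) (qmul m (Qs (Suc i))) (Qs (Suc i))
                  (induced_cong (qcar S m (Qs (Suc i))) (qmul m (Qs (Suc i)))
                      (subquot m (Qs i) (Qs (Suc i))))))"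

definition cext_mul :: "('f \<Rightarrow> 'f \<Rightarrow> 'f) \<Rightarrow> ('f \<Rightarrow> 'f \<Rightarrow> 'x::ab_group_add)
    \<Rightarrow> 'f \<times> 'x \<Rightarrow> 'f \<times> 'x \<Rightarrow> 'f \<times> 'x" where
  "cext_mul Fm \<theta> p p' = (Fm (fst p) (fst p'), snd p + snd p' + \<theta> (fst p) (fst p'))"

definition is_central_extension ::
  "'a set \<Rightarrow> ('a \<Rightarrow> 'a \<Rightarrow> 'a) \<Rightarrow> 'x::ab_group_add set
     \<Rightarrow> 'f set \<Rightarrow> ('f \<Rightarrow> 'f \<Rightarrow> 'f) \<Rightarrow> 'f \<Rightarrow> bool" where
  "is_central_extension S m X Fc Fm Fu \<longleftrightarrow>
     loop Fc Fm Fu \<and> is_comm_group X (+) 0 \<and>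
     (\<exists>\<theta> f. (\<forall>r\<in>Fc. \<theta> Fu r = 0 \<and> \<theta> r Fu = 0) \<and> (\<forall>r\<in>Fc. \<forall>s\<in>Fc. \<theta> r s \<in> X)
        \<and> loop_iso S m (Fc \<times> X) (cext_mul Fm \<theta>) f)"

definition F2mul :: "'a::ab_group_add \<Rightarrow> 'a \<Rightarrow> 'a \<Rightarrow> 'a" where
  "F2mul e a b = (if a = e \<and> b = e then e else 0)"

definition coset :: "'a::ab_group_add set \<Rightarrow> 'a \<Rightarrow> 'a set" where
  "coset B u = (\<lambda>b. u + b) ` B"

definition cosets :: "'a::ab_group_add set \<Rightarrow> 'a set set" where
  "cosets B = range (coset B)"

definition cadd :: "'a::ab_group_add set \<Rightarrow> 'a set \<Rightarrow> 'a set" where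
  "cadd U V = {a + b | a b. a \<in> U \<and> b \<in> V}"

definition csmul :: "'a::ab_group_add \<Rightarrow> 'a set \<Rightarrow> 'a \<Rightarrow> 'a set \<Rightarrow> 'a set" where
  "csmul e B l U = (if l = e then U else B)"

definition assoc_bilin :: "('a::ab_group_add set \<Rightarrow> 'a) \<Rightarrow> 'a set \<Rightarrow> 'a set \<Rightarrow> 'a" where
  "assoc_bilin qb U V = qb (cadd U V) - qb U - qb V"

definition is_quadratic_form :: "'a::ab_group_add \<Rightarrow> 'a set \<Rightarrow> ('a set \<Rightarrow> 'a) \<Rightarrow> bool" where
  "is_quadratic_form e B qb \<longleftrightarrow>
     (\<forall>U\<in>cosets B. qb U \<in> {0, e})
   \<and> (\<forall>l\<in>{0, e}. \<forall>U\<in>cosets B. qb (csmul e B l U) = F2mul e (F2mul e l l) (qb U))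
   \<and> (\<forall>U\<in>cosets B. \<forall>U'\<in>cosets B. \<forall>V\<in>cosets B.
        assoc_bilin qb (cadd U U') V = assoc_bilin qb U V + assoc_bilin qb U' V
      \<and> assoc_bilin qb V (cadd U U') = assoc_bilin qb V U + assoc_bilin qb V U')
   \<and> (\<forall>l\<in>{0, e}. \<forall>U\<in>cosets B. \<forall>V\<in>cosets B.
        assoc_bilin qb (csmul e B l U) V = F2mul e l (assoc_bilin qb U V)
      \<and> assoc_bilin qb U (csmul e B l V) = F2mul e l (assoc_bilin qb U V))"

definition is_linear_form :: "'a::ab_group_add \<Rightarrow> 'a set \<Rightarrow> ('a set \<Rightarrow> 'a) \<Rightarrow> bool" where
  "is_linear_form e B qb \<longleftrightarrow>
     (\<forall>U\<in>cosets B. \<forall>V\<in>cosets B. qb (cadd U V) = qb U + qb V)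
   \<and> (\<forall>l\<in>{0, e}. \<forall>U\<in>cosets B. qb (csmul e B l U) = F2mul e l (qb U))"

definition qlift :: "'a::ab_group_add set \<Rightarrow> ('a set \<Rightarrow> 'a) \<Rightarrow> 'a \<Rightarrow> 'a" where
  "qlift B qb u = qb (coset B u)"

definition hlift :: "'a::ab_group_add set \<Rightarrow> ('a set \<Rightarrow> 'a) \<Rightarrow> 'a \<Rightarrow> 'a \<Rightarrow> 'a" where
  "hlift B qb u v = assoc_bilin qb (coset B u) (coset B v)"

definition Qcar :: "'a::ab_group_add \<Rightarrow> ('a \<times> 'a) set" where
  "Qcar e = {0, e} \<times> UNIV"

definition Qmul :: "'a::ab_group_add \<Rightarrow> 'a set \<Rightarrow> ('a set \<Rightarrow> 'a) \<Rightarrow> 'a \<times> 'a \<Rightarrow> 'a \<times> 'a \<Rightarrow> 'a \<times> 'a" where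
  "Qmul e B qb p p' = (case p of (i, u) \<Rightarrow> case p' of (j, v) \<Rightarrow>
      (i + j, u + v + F2mul e j (qlift B qb u) + F2mul e i (hlift B qb u v)))"

definition FWbar_car :: "'a::ab_group_add \<Rightarrow> 'a set \<Rightarrow> ('a \<times> 'a set) set" where
  "FWbar_car e B = {0, e} \<times> cosets B"

definition FWbar_mul :: "'a::ab_group_add \<times> 'a set \<Rightarrow> 'a \<times> 'a set \<Rightarrow> 'a \<times> 'a set" where
  "FWbar_mul p p' = (fst p + fst p', cadd (snd p) (snd p'))"

end

theory Submission
  imports Defs
begin

lemma bij_self_iff:
  assumes "\<forall>y\<in>S. f y \<in> S"
  shows "bij_betw f S S \<longleftrightarrow> (\<forall>y\<in>S. \<exists>z\<in>S. f z = y) \<and> (\<forall>y\<in>S. \<forall>z\<in>S. f y = f z \<longrightarrow> y = z)"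
proof -
  have "f ` S = S \<longleftrightarrow> (\<forall>y\<in>S. \<exists>z\<in>S. f z = y)"
  proof
    assume "f ` S = S" then show "\<forall>y\<in>S. \<exists>z\<in>S. f z = y" by (metis imageE)
  next
    assume "\<forall>y\<in>S. \<exists>z\<in>S. f z = y" then show "f ` S = S" using assms by (auto simp: image_iff) 
  qed
  then show ?thesis unfolding bij_betw_def inj_on_def by blast
qed

lemma loop_iff:
 "loop S m u \<longleftrightarrow> u \<in> S \<and> (\<forall>x\<in>S. \<forall>y\<in>S. m x y \<in> S) \<and> (\<forall>x\<in>S. m u x = x \<and> m x u = x)
   \<and> (\<forall>x\<in>S. \<forall>y\<in>S. \<exists>z\<in>S. m x z = y) \<and> (\<forall>x\<in>S. \<forall>y\<in>S. \<exists>z\<in>S. m z x = y)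
   \<and> (\<forall>x\<in>S. \<forall>y\<in>S. \<forall>z\<in>S. m x y = m x z \<longrightarrow> y = z)
   \<and> (\<forall>x\<in>S. \<forall>y\<in>S. \<forall>z\<in>S. m y x = m z x \<longrightarrow> y = z)" (is "?L \<longleftrightarrow> ?R")
proof
  assume L: ?L
  then have c: "\<forall>x\<in>S. \<forall>y\<in>S. m x y \<in> S" unfolding loop_def by blast
  have bj: "\<forall>x\<in>S. bij_betw (m x) S S \<and> bij_betw (\<lambda>y. m y x) S S" using L unfolding loop_def by blast
  have "\<forall>x\<in>S. ((\<forall>y\<in>S. \<exists>z\<in>S. m x z = y) \<and> (\<forall>y\<in>S. \<forall>z\<in>S. m x y = m x z \<longrightarrow> y = z))
     \<and> ((\<forall>y\<in>S. \<exists>z\<in>S. m z x = y) \<and> (\<forall>y\<in>S. \<forall>z\<in>S. m y x = m z x \<longrightarrow> y = z))"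
  proof
    fix x assume x: "x \<in> S"
    have 1: "\<forall>y\<in>S. m x y \<in> S" "\<forall>y\<in>S. m y x \<in> S" using c x by auto
    have "bij_betw (m x) S S" "bij_betw (\<lambda>y. m y x) S S" using bj x by auto
    then show "((\<forall>y\<in>S. \<exists>z\<in>S. m x z = y) \<and> (\<forall>y\<in>S. \<forall>z\<in>S. m x y = m x z \<longrightarrow> y = z))
     \<and> ((\<forall>y\<in>S. \<exists>z\<in>S. m z x = y) \<and> (\<forall>y\<in>S. \<forall>z\<in>S. m y x = m z x \<longrightarrow> y = z))"
      using bij_self_iff[OF 1(1)] bij_self_iff[OF 1(2)] by blast
  qed
  then show ?R using L c unfolding loop_def by blast
next
  assume r: ?R
  then have c: "\<forall>x\<in>S. \<forall>y\<in>S. m x y \<in> S" by blast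
  have "\<forall>x\<in>S. bij_betw (m x) S S \<and> bij_betw (\<lambda>y. m y x) S S"
  proof
    fix x assume x: "x \<in> S"
    have 1: "\<forall>y\<in>S. m x y \<in> S" "\<forall>y\<in>S. m y x \<in> S" using c x by auto
    show "bij_betw (m x) S S \<and> bij_betw (\<lambda>y. m y x) S S"
      using bij_self_iff[OF 1(1)] bij_self_iff[OF 1(2)] r x by blast
  qed
  then show ?L unfolding loop_def using r c by blast
qed

lemma ball_img: "(\<forall>X\<in>f ` A. P X) \<longleftrightarrow> (\<forall>x\<in>A. P (f x))" by blast

lemma loopD:
  assumes "loop S m u"
  shows loop_unit: "u \<in> S" and loop_closed: "x\<in>S \<Longrightarrow> y\<in>S \<Longrightarrow> m x y \<in> S"
  and loop_lu: "x\<in>S \<Longrightarrow> m u x = x" and loop_ru: "x\<in>S \<Longrightarrow> m x u = x"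
  and loop_lcancel: "x\<in>S \<Longrightarrow> y\<in>S \<Longrightarrow> z\<in>S \<Longrightarrow> m x y = m x z \<Longrightarrow> y = z"
  and loop_rcancel: "x\<in>S \<Longrightarrow> y\<in>S \<Longrightarrow> z\<in>S \<Longrightarrow> m y x = m z x \<Longrightarrow> y = z"
  and loop_lsol: "x\<in>S \<Longrightarrow> y\<in>S \<Longrightarrow> \<exists>z\<in>S. m x z = y"
  and loop_rsol: "x\<in>S \<Longrightarrow> y\<in>S \<Longrightarrow> \<exists>z\<in>S. m z x = y"
  using assms unfolding loop_iff by blast+

lemma ldiv_eq:
  assumes "loop S m u" "x\<in>S" "y\<in>S" "m x y = z"
  shows "ldiv S m x z = y"
  unfolding ldiv_def
proof (rule the_equality)
  show "y \<in> S \<and> m x y = z" using assms by blast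
next
  fix y' assume "y' \<in> S \<and> m x y' = z"
  then show "y' = y" using assms loop_lcancel[OF assms(1)] by metis
qed

lemma ldiv_in:
  assumes "loop S m u" "x\<in>S" "z\<in>S"
  shows "ldiv S m x z \<in> S \<and> m x (ldiv S m x z) = z"
proof -
  obtain y where "y\<in>S" "m x y = z" using loop_lsol[OF assms] by blast
  then show ?thesis using ldiv_eq[OF assms(1,2)] by simp
qed

lemma rdiv_eq:
  assumes "loop S m u" "y\<in>S" "x\<in>S" "m x y = z"
  shows "rdiv S m z y = x"
  unfolding rdiv_def
proof (rule the_equality)
  show "x \<in> S \<and> m x y = z" using assms by blast
next
  fix x' assume "x' \<in> S \<and> m x' y = z"
  then show "x' = x" using assms loop_rcancel[OF assms(1)] by metis
qed

lemma rdiv_in: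
  assumes "loop S m u" "y\<in>S" "z\<in>S"
  shows "rdiv S m z y \<in> S \<and> m (rdiv S m z y) y = z"
proof -
  obtain x where "x\<in>S" "m x y = z" using loop_rsol[OF assms] by blast
  then show ?thesis using rdiv_eq[OF assms(1,2)] by simp
qed

lemma comm_groupI:
  assumes u: "u\<in>S" and cl: "\<And>x y. x\<in>S \<Longrightarrow> y\<in>S \<Longrightarrow> m x y \<in> S"
    and lu: "\<And>x. x\<in>S \<Longrightarrow> m u x = x"
    and as: "\<And>x y z. x\<in>S \<Longrightarrow> y\<in>S \<Longrightarrow> z\<in>S \<Longrightarrow> m x (m y z) = m (m x y) z"
    and cm: "\<And>x y. x\<in>S \<Longrightarrow> y\<in>S \<Longrightarrow> m x y = m y x"
    and inv: "\<And>x. x\<in>S \<Longrightarrow> \<exists>y\<in>S. m x y = u"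
  shows "is_comm_group S m u"
proof -
  have ru: "\<And>x. x\<in>S \<Longrightarrow> m x u = x" using lu cm u by metis
  have sol: "\<exists>z\<in>S. m x z = y" if th: "x\<in>S" "y\<in>S" for x y
  proof -
    obtain x' where x': "x'\<in>S" "m x x' = u" using inv th by blast
    have "m x (m x' y) = y" using as[of x x' y] x' th lu by simp
    then show ?thesis using cl x' th by blast
  qed
  have canc: "y = z" if th: "x\<in>S" "y\<in>S" "z\<in>S" "m x y = m x z" for x y z
  proof -
    obtain x' where x': "x'\<in>S" "m x x' = u" using inv th by blast
    have "m x' x = u" using x' cm th by metis
    have "y = m (m x' x) y" using lu th \<open>m x' x = u\<close> by simp
    also have "\<dots> = m x' (m x y)" using as[of x' x y] x' th by simp
    also have "\<dots> = m x' (m x z)" using th by simp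
    also have "\<dots> = m (m x' x) z" using as[of x' x z] x' th by simp
    also have "\<dots> = z" using lu th \<open>m x' x = u\<close> by simp
    finally show ?thesis .
  qed
  have "loop S m u" unfolding loop_iff
  proof (intro conjI ballI)
    fix x y z assume xyz: "x\<in>S" "y\<in>S" "z\<in>S"
    show "m x y = m x z \<longrightarrow> y = z" using canc xyz by blast
    show "m y x = m z x \<longrightarrow> y = z" using canc[of x y z] cm xyz by metis
  next
    fix x y assume xy: "x\<in>S" "y\<in>S"
    show "m x y \<in> S" using cl xy .
    show "\<exists>z\<in>S. m x z = y" using sol xy .
    show "\<exists>z\<in>S. m z x = y" using sol[OF xy] cm xy by metis
  qed (use u lu ru in auto)
  then show ?thesis unfolding is_comm_group_def is_group_def using as cm by blast
qed

lemma comm_group_center: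
  assumes "is_comm_group S m u" shows "center S m = S"
proof -
  have as: "\<And>x y z. x\<in>S \<Longrightarrow> y\<in>S \<Longrightarrow> z\<in>S \<Longrightarrow> m x (m y z) = m (m x y) z"
    using assms unfolding is_comm_group_def is_group_def by blast
  have cm: "\<And>x y. x\<in>S \<Longrightarrow> y\<in>S \<Longrightarrow> m x y = m y x"
    using assms unfolding is_comm_group_def is_group_def by blast
  show ?thesis unfolding center_def nucleus_def
    using as cm by auto
qed

locale iso =
  fixes S :: "'a set" and m :: "'a \<Rightarrow> 'a \<Rightarrow> 'a" and S2 :: "'b set" and m2 and \<psi> :: "'a \<Rightarrow> 'b"
  assumes bij: "bij_betw \<psi> S S2"
  and hom: "\<And>x y. x\<in>S \<Longrightarrow> y\<in>S \<Longrightarrow> m2 (\<psi> x) (\<psi> y) = \<psi> (m x y)"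
begin

lemma img: "S2 = \<psi> ` S" using bij by (simp add: bij_betw_def)
lemma injj: "x\<in>S \<Longrightarrow> y\<in>S \<Longrightarrow> \<psi> x = \<psi> y \<longleftrightarrow> x = y"
  using bij by (meson bij_betw_imp_inj_on inj_on_eq_iff)

lemma loop_tr: assumes "loop S m u" shows "loop S2 m2 (\<psi> u)"
proof -
  note cl = loop_closed[OF assms] and un = loop_unit[OF assms]
  show ?thesis unfolding loop_iff img
  proof (intro conjI ballI)
    show "\<psi> u \<in> \<psi> ` S" using un by blast
  next
    fix X Y assume "X \<in> \<psi> ` S" "Y \<in> \<psi> ` S"
    then obtain x y where xy: "x\<in>S" "y\<in>S" "X = \<psi> x" "Y = \<psi> y" by blast
    show "m2 X Y \<in> \<psi> ` S" using xy by (simp add: hom cl)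
    show "\<exists>z\<in>\<psi> ` S. m2 X z = Y"
    proof -
      obtain z where "z\<in>S" "m x z = y" using loop_lsol[OF assms] xy by blast
      then show ?thesis using xy hom by auto
    qed
    show "\<exists>z\<in>\<psi> ` S. m2 z X = Y"
    proof -
      obtain z where "z\<in>S" "m z x = y" using loop_rsol[OF assms] xy by blast
      then show ?thesis using xy hom by auto
    qed
  next
    fix X assume "X \<in> \<psi> ` S"
    then obtain x where xy: "x\<in>S" "X = \<psi> x" by blast
    show "m2 (\<psi> u) X = X" "m2 X (\<psi> u) = X" using xy un
      by (simp_all add: hom loop_lu[OF assms] loop_ru[OF assms])
  next
    fix X Y Z assume "X \<in> \<psi> ` S" "Y \<in> \<psi> ` S" "Z \<in> \<psi> ` S"
    then obtain x y z where xy: "x\<in>S" "y\<in>S" "z\<in>S" "X = \<psi> x" "Y = \<psi> y" "Z = \<psi> z" by blast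
    show "m2 X Y = m2 X Z \<longrightarrow> Y = Z"
      using xy loop_lcancel[OF assms, of x y z] by (simp add: hom injj cl)
    show "m2 Y X = m2 Z X \<longrightarrow> Y = Z"
      using xy loop_rcancel[OF assms, of x y z] by (simp add: hom injj cl)
  qed
qed

lemma center_tr: assumes "loop S m u" "x \<in> S"
  shows "\<psi> x \<in> center S2 m2 \<longleftrightarrow> x \<in> center S m"
proof -
  note L = loopD[OF assms(1)]
  have e: "\<And>y z. y\<in>S \<Longrightarrow> z\<in>S \<Longrightarrow>
     (m2 (\<psi> x) (m2 (\<psi> y) (\<psi> z)) = m2 (m2 (\<psi> x) (\<psi> y)) (\<psi> z) \<and> m2 (\<psi> y) (m2 (\<psi> x) (\<psi> z)) = m2 (m2 (\<psi> y) (\<psi> x)) (\<psi> z)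
         \<and> m2 (\<psi> y) (m2 (\<psi> z) (\<psi> x)) = m2 (m2 (\<psi> y) (\<psi> z)) (\<psi> x))
    \<longleftrightarrow> (m x (m y z) = m (m x y) z \<and> m y (m x z) = m (m y x) z
         \<and> m y (m z x) = m (m y z) x)"
    using assms(2) by (simp add: loop_closed[OF assms(1)] hom injj)
  have e2: "\<And>y. y\<in>S \<Longrightarrow> m2 (\<psi> x) (\<psi> y) = m2 (\<psi> y) (\<psi> x) \<longleftrightarrow> m x y = m y x"
    using assms(2) by (simp add: loop_closed[OF assms(1)] hom injj)
  have q1: "(\<forall>Y\<in>\<psi> ` S. \<forall>Z\<in>\<psi> ` S. m2 (\<psi> x) (m2 Y Z) = m2 (m2 (\<psi> x) Y) Z \<and> m2 Y (m2 (\<psi> x) Z) = m2 (m2 Y (\<psi> x)) Z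
         \<and> m2 Y (m2 Z (\<psi> x)) = m2 (m2 Y Z) (\<psi> x))
    \<longleftrightarrow> (\<forall>y\<in>S. \<forall>z\<in>S. m x (m y z) = m (m x y) z \<and> m y (m x z) = m (m y x) z
         \<and> m y (m z x) = m (m y z) x)"
    unfolding ball_img using e by blast
  have q2: "(\<forall>Y\<in>\<psi> ` S. m2 (\<psi> x) Y = m2 Y (\<psi> x)) \<longleftrightarrow> (\<forall>y\<in>S. m x y = m y x)"
    unfolding ball_img using e2 by blast
  have "\<psi> x \<in> S2" using img assms(2) by blast
  then show ?thesis unfolding center_def nucleus_def img mem_Collect_eq q1 q2 using assms(2)
    by blast
qed

lemma group_tr: assumes "is_group S m u" shows "is_group S2 m2 (\<psi> u)"
proof -
  have L: "loop S m u" using assms unfolding is_group_def by blast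
  note LL = loop_closed[OF L]
  have "\<forall>X\<in>S2. \<forall>Y\<in>S2. \<forall>Z\<in>S2. m2 X (m2 Y Z) = m2 (m2 X Y) Z"
  proof (intro ballI)
    fix X Y Z assume "X \<in> S2" "Y \<in> S2" "Z \<in> S2"
    then obtain x y z where xy: "x\<in>S" "y\<in>S" "z\<in>S" "X = \<psi> x" "Y = \<psi> y" "Z = \<psi> z" using img by blast
    have "m x (m y z) = m (m x y) z" using assms xy unfolding is_group_def by blast
    then show "m2 X (m2 Y Z) = m2 (m2 X Y) Z" using xy by (simp add: LL hom)
  qed
  then show ?thesis using loop_tr[OF L] unfolding is_group_def by blast
qed

lemma comm_group_tr: assumes "is_comm_group S m u" shows "is_comm_group S2 m2 (\<psi> u)"
proof -
  have "\<forall>X\<in>S2. \<forall>Y\<in>S2. m2 X Y = m2 Y X"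
  proof (intro ballI)
    fix X Y assume "X \<in> S2" "Y \<in> S2"
    then obtain x y where xy: "x\<in>S" "y\<in>S" "X = \<psi> x" "Y = \<psi> y" using img by blast
    have "m x y = m y x" using assms xy unfolding is_comm_group_def by blast
    then show "m2 X Y = m2 Y X" using xy by (simp add: hom)
  qed
  then show ?thesis using group_tr assms unfolding is_comm_group_def by blast
qed

end


lemma normal_subloopI:
  fixes \<phi> :: "'a \<Rightarrow> 'b"
  assumes L0: "loop T0 m0 u0" and H: "loop_hom S m T0 m0 \<phi>" and surj: "\<phi> ` S = T0"
  shows "normal_subloop S m u {x\<in>S. \<phi> x = u0}"
proof -
  define \<psi> where "\<psi> t = {y\<in>S. \<phi> y = t}" for t
  define m' where "m' A C = \<psi> (m0 (\<phi> (SOME a. a\<in>A)) (\<phi> (SOME c. c\<in>C)))" for A C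
  have ne: "\<exists>y. y \<in> \<psi> t" if "t\<in>T0" for t using that surj unfolding \<psi>_def by blast
  have \<psi>inj: "t = t'" if th: "t\<in>T0" "t'\<in>T0" "\<psi> t = \<psi> t'" for t t'
  proof -
    obtain y where "y \<in> \<psi> t" using ne th(1) by blast
    then show ?thesis using th(3) unfolding \<psi>_def by blast
  qed
  have \<psi>some: "\<phi> (SOME a. a\<in>\<psi> t) = t" if "t\<in>T0" for t
  proof -
    have "(SOME a. a\<in>\<psi> t) \<in> \<psi> t" using ne[OF that] by (metis someI_ex)
    then show ?thesis unfolding \<psi>_def by blast
  qed
  interpret I: iso T0 m0 "\<psi> ` T0" m' \<psi>
  proof
    show "bij_betw \<psi> T0 (\<psi> ` T0)" unfolding bij_betw_def inj_on_def using \<psi>inj by blast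
    fix x y assume "x\<in>T0" "y\<in>T0"
    then show "m' (\<psi> x) (\<psi> y) = \<psi> (m0 x y)" unfolding m'_def using \<psi>some by simp
  qed
  have L: "loop (\<psi> ` T0) m' (\<psi> u0)" by (rule I.loop_tr[OF L0])
  have Hm: "\<phi> (m x y) = m0 (\<phi> x) (\<phi> y)" "\<phi> x \<in> T0" if "x\<in>S" "y\<in>S" for x y
    using H that unfolding loop_hom_def by auto
  have "loop_hom S m (\<psi> ` T0) m' (\<lambda>x. \<psi> (\<phi> x))"
    unfolding loop_hom_def using Hm I.hom by auto
  moreover have "{x\<in>S. \<phi> x = u0} = {x\<in>S. \<psi> (\<phi> x) = \<psi> u0}"
    using \<psi>inj Hm loop_unit[OF L0] by blast
  ultimately show ?thesis unfolding normal_subloop_def using L by blast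
qed

section \<open>Central subloops induce abelian congruences\<close>

lemma central_ops:
  assumes k: "k \<in> center S m" and x: "x\<in>S" and y: "y\<in>S"
  shows cen_comm: "m k x = m x k"
    and cen_r: "m x (m y k) = m (m x y) k"
    and cen_l: "m (m x k) y = m (m x y) k"
proof -
  have kS: "k\<in>S" and
    n: "\<And>y z. y\<in>S \<Longrightarrow> z\<in>S \<Longrightarrow> m k (m y z) = m (m k y) z \<and> m y (m k z) = m (m y k) z \<and> m y (m z k) = m (m y z) k"
    and c: "\<And>y. y\<in>S \<Longrightarrow> m k y = m y k"
    using k unfolding center_def nucleus_def mem_Collect_eq by blast+
  show "m k x = m x k" using c x .
  show r: "m x (m y k) = m (m x y) k" using n x y by blast
  have "m (m x k) y = m x (m k y)" using n x y by metis
  also have "\<dots> = m x (m y k)" using c y by simp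
  also have "\<dots> = m (m x y) k" using r .
  finally show "m (m x k) y = m (m x y) k" .
qed

lemma cen4:
  assumes L: "loop S m u" and k: "k \<in> center S m" and k': "k' \<in> center S m" and x: "x\<in>S" and y: "y\<in>S"
  shows "m (m x k) (m y k') = m (m x y) (m k k')"
proof -
  have kS: "k\<in>S" "k'\<in>S" using k k' unfolding center_def nucleus_def mem_Collect_eq by blast+
  have "m (m x k) (m y k') = m (m (m x k) y) k'" using cen_r[OF k'] x y kS loop_closed[OF L] by simp
  also have "\<dots> = m (m (m x y) k) k'" using cen_l[OF k x y] by simp
  also have "\<dots> = m (m x y) (m k k')" using cen_r[OF k' _ kS(1)] x y loop_closed[OF L] by simp
  finally show ?thesis .
qed


context
  fixes S :: "'a set" and m u Z
  assumes L: "loop S m u" and Zc: "Z \<subseteq> center S m" and LZ: "loop Z m u"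
begin

lemma ZS: "z\<in>Z \<Longrightarrow> z\<in>S" using Zc unfolding center_def nucleus_def by blast
lemma Zcen: "z\<in>Z \<Longrightarrow> z\<in>center S m" using Zc by blast
lemma Zm: "z\<in>Z \<Longrightarrow> z'\<in>Z \<Longrightarrow> m z z' \<in> Z" using loop_closed[OF LZ] .
lemma Zld: assumes "z\<in>Z" "z'\<in>Z" shows "ldiv S m z z' \<in> Z \<and> m z (ldiv S m z z') = z'"
proof -
  obtain r where "r\<in>Z" "m z r = z'" using loop_lsol[OF LZ assms] by blast
  then show ?thesis using ldiv_eq[OF L ZS[OF assms(1)] ZS] by simp
qed
lemma Zrd: assumes "z\<in>Z" "z'\<in>Z" shows "rdiv S m z' z \<in> Z \<and> m (rdiv S m z' z) z = z'"
proof -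
  obtain r where "r\<in>Z" "m r z = z'" using loop_rsol[OF LZ assms] by blast
  then show ?thesis using rdiv_eq[OF L ZS[OF assms(1)] ZS] by simp
qed
lemma uZ: "u \<in> Z" using loop_unit[OF LZ] .

lemma term_lin:
  assumes "t \<in> loop_terms S m u"
  shows "(\<forall>x y. (\<forall>i. x i \<in> S \<and> y i \<in> S) \<longrightarrow> t x y \<in> S) \<and>
    (\<exists>Lf Mf. (\<forall>z. (\<forall>i. z i \<in> Z) \<longrightarrow> Lf z \<in> Z) \<and> (\<forall>w. (\<forall>i. w i \<in> Z) \<longrightarrow> Mf w \<in> Z)
      \<and> Lf (\<lambda>_. u) = u \<and> Mf (\<lambda>_. u) = u \<and>
      (\<forall>a c z w. (\<forall>i. a i \<in> S \<and> c i \<in> S \<and> z i \<in> Z \<and> w i \<in> Z) \<longrightarrow>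
         t (\<lambda>i. m (a i) (z i)) (\<lambda>i. m (c i) (w i)) = m (m (t a c) (Lf z)) (Mf w)))"
  using assms
proof induct
  case (proj1 i)
  have lin: "\<forall>a c z w. (\<forall>i. a i \<in> S \<and> c i \<in> S \<and> z i \<in> Z \<and> w i \<in> Z) \<longrightarrow>
         m (a i) (z i) = m (m (a i) (z i)) u"
  proof (intro allI impI)
    fix a c z w :: "nat \<Rightarrow> 'a" assume h: "\<forall>i. a i \<in> S \<and> c i \<in> S \<and> z i \<in> Z \<and> w i \<in> Z"
    then have "a i \<in> S" "z i \<in> S" using ZS by auto
    then show "m (a i) (z i) = m (m (a i) (z i)) u" using loop_ru[OF L] loop_closed[OF L] by simp
  qed
  show ?case
    apply (rule conjI, blast)
    apply (rule exI[of _ "\<lambda>z. z i"], rule exI[of _ "\<lambda>w. u"])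
    using lin uZ by auto
next
  case (proj2 i)
  have lin: "\<forall>a c z w. (\<forall>i. a i \<in> S \<and> c i \<in> S \<and> z i \<in> Z \<and> w i \<in> Z) \<longrightarrow>
         m (c i) (w i) = m (m (c i) u) (w i)"
  proof (intro allI impI)
    fix a c z w :: "nat \<Rightarrow> 'a" assume h: "\<forall>i. a i \<in> S \<and> c i \<in> S \<and> z i \<in> Z \<and> w i \<in> Z"
    then have "c i \<in> S" by auto
    then show "m (c i) (w i) = m (m (c i) u) (w i)" using loop_ru[OF L] by simp
  qed
  show ?case
    apply (rule conjI, blast)
    apply (rule exI[of _ "\<lambda>w. u"], rule exI[of _ "\<lambda>z. z i"])
    using lin uZ by auto
next
  case unit
  have "m (m u u) u = u" using loop_ru[OF L] loop_unit[OF L] by simp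
  then show ?case
    apply (intro conjI)
    using loop_unit[OF L] apply blast
    apply (rule exI[of _ "\<lambda>w. u"], rule exI[of _ "\<lambda>z. u"])
    using uZ by auto
next
  case (mul t1 t2)
  obtain L1 M1 where I1: "\<forall>z. (\<forall>i. z i \<in> Z) \<longrightarrow> L1 z \<in> Z" "\<forall>w. (\<forall>i. w i \<in> Z) \<longrightarrow> M1 w \<in> Z"
      "L1 (\<lambda>_. u) = u" "M1 (\<lambda>_. u) = u"
      "\<forall>a c z w. (\<forall>i. a i \<in> S \<and> c i \<in> S \<and> z i \<in> Z \<and> w i \<in> Z) \<longrightarrow>
         t1 (\<lambda>i. m (a i) (z i)) (\<lambda>i. m (c i) (w i)) = m (m (t1 a c) (L1 z)) (M1 w)"
    using mul(2) by blast
  obtain L2 M2 where I2: "\<forall>z. (\<forall>i. z i \<in> Z) \<longrightarrow> L2 z \<in> Z" "\<forall>w. (\<forall>i. w i \<in> Z) \<longrightarrow> M2 w \<in> Z"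
      "L2 (\<lambda>_. u) = u" "M2 (\<lambda>_. u) = u"
      "\<forall>a c z w. (\<forall>i. a i \<in> S \<and> c i \<in> S \<and> z i \<in> Z \<and> w i \<in> Z) \<longrightarrow>
         t2 (\<lambda>i. m (a i) (z i)) (\<lambda>i. m (c i) (w i)) = m (m (t2 a c) (L2 z)) (M2 w)"
    using mul(4) by blast
  have C1: "\<forall>x y. (\<forall>i. x i \<in> S \<and> y i \<in> S) \<longrightarrow> t1 x y \<in> S" using mul(2) by blast
  have C2: "\<forall>x y. (\<forall>i. x i \<in> S \<and> y i \<in> S) \<longrightarrow> t2 x y \<in> S" using mul(4) by blast
  have clo: "\<forall>x y. (\<forall>i. x i \<in> S \<and> y i \<in> S) \<longrightarrow> m (t1 x y) (t2 x y) \<in> S"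
    using C1 C2 loop_closed[OF L] by blast
  have lin: "\<forall>a c z w. (\<forall>i. a i \<in> S \<and> c i \<in> S \<and> z i \<in> Z \<and> w i \<in> Z) \<longrightarrow>
         m (t1 (\<lambda>i. m (a i) (z i)) (\<lambda>i. m (c i) (w i))) (t2 (\<lambda>i. m (a i) (z i)) (\<lambda>i. m (c i) (w i)))
          = m (m (m (t1 a c) (t2 a c)) (m (L1 z) (L2 z))) (m (M1 w) (M2 w))"
  proof (intro allI impI)
    fix a c z w :: "nat \<Rightarrow> 'a" assume h: "\<forall>i. a i \<in> S \<and> c i \<in> S \<and> z i \<in> Z \<and> w i \<in> Z"
    define p1 where "p1 = t1 a c" define p2 where "p2 = t2 a c"
    define l1 where "l1 = L1 z" define l2 where "l2 = L2 z"
    define m1 where "m1 = M1 w" define m2 where "m2 = M2 w"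
    have p: "p1 \<in> S" "p2 \<in> S" using C1 C2 h unfolding p1_def p2_def by auto
    have k: "l1 \<in> Z" "l2 \<in> Z" "m1 \<in> Z" "m2 \<in> Z" using I1 I2 h unfolding l1_def l2_def m1_def m2_def by auto
    have e1: "t1 (\<lambda>i. m (a i) (z i)) (\<lambda>i. m (c i) (w i)) = m p1 (m l1 m1)"
      using I1(5) h cen_r[OF Zcen[OF k(3)] p(1) ZS[OF k(1)]] unfolding p1_def l1_def m1_def by simp
    have e2: "t2 (\<lambda>i. m (a i) (z i)) (\<lambda>i. m (c i) (w i)) = m p2 (m l2 m2)"
      using I2(5) h cen_r[OF Zcen[OF k(4)] p(2) ZS[OF k(2)]] unfolding p2_def l2_def m2_def by simp
    have "m (m p1 (m l1 m1)) (m p2 (m l2 m2)) = m (m p1 p2) (m (m l1 m1) (m l2 m2))"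
      using cen4[OF L Zcen Zcen p] Zm k by simp
    also have "m (m l1 m1) (m l2 m2) = m (m l1 l2) (m m1 m2)"
      using cen4[OF L Zcen[OF k(3)] Zcen[OF k(4)] ZS[OF k(1)] ZS[OF k(2)]] .
    also have "m (m p1 p2) (m (m l1 l2) (m m1 m2)) = m (m (m p1 p2) (m l1 l2)) (m m1 m2)"
      using cen_r[OF Zcen[OF Zm[OF k(3,4)]]] loop_closed[OF L] p ZS Zm k by simp
    finally show "m (t1 (\<lambda>i. m (a i) (z i)) (\<lambda>i. m (c i) (w i))) (t2 (\<lambda>i. m (a i) (z i)) (\<lambda>i. m (c i) (w i)))
          = m (m (m (t1 a c) (t2 a c)) (m (L1 z) (L2 z))) (m (M1 w) (M2 w))"
      unfolding e1 e2 p1_def p2_def l1_def l2_def m1_def m2_def .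
  qed
  show ?case
    apply (rule conjI)
    using clo apply simp
    apply (rule exI[of _ "\<lambda>z. m (L1 z) (L2 z)"], rule exI[of _ "\<lambda>w. m (M1 w) (M2 w)"])
    using lin I1 I2 Zm loop_ru[OF LZ uZ] by auto
next
  case (ld t1 t2)
  obtain L1 M1 where I1: "\<forall>z. (\<forall>i. z i \<in> Z) \<longrightarrow> L1 z \<in> Z" "\<forall>w. (\<forall>i. w i \<in> Z) \<longrightarrow> M1 w \<in> Z"
      "L1 (\<lambda>_. u) = u" "M1 (\<lambda>_. u) = u"
      "\<forall>a c z w. (\<forall>i. a i \<in> S \<and> c i \<in> S \<and> z i \<in> Z \<and> w i \<in> Z) \<longrightarrow>
         t1 (\<lambda>i. m (a i) (z i)) (\<lambda>i. m (c i) (w i)) = m (m (t1 a c) (L1 z)) (M1 w)"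
    using ld(2) by blast
  obtain L2 M2 where I2: "\<forall>z. (\<forall>i. z i \<in> Z) \<longrightarrow> L2 z \<in> Z" "\<forall>w. (\<forall>i. w i \<in> Z) \<longrightarrow> M2 w \<in> Z"
      "L2 (\<lambda>_. u) = u" "M2 (\<lambda>_. u) = u"
      "\<forall>a c z w. (\<forall>i. a i \<in> S \<and> c i \<in> S \<and> z i \<in> Z \<and> w i \<in> Z) \<longrightarrow>
         t2 (\<lambda>i. m (a i) (z i)) (\<lambda>i. m (c i) (w i)) = m (m (t2 a c) (L2 z)) (M2 w)"
    using ld(4) by blast
  have C1: "\<forall>x y. (\<forall>i. x i \<in> S \<and> y i \<in> S) \<longrightarrow> t1 x y \<in> S" using ld(2) by blast
  have C2: "\<forall>x y. (\<forall>i. x i \<in> S \<and> y i \<in> S) \<longrightarrow> t2 x y \<in> S" using ld(4) by blast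
  have clo: "\<forall>x y. (\<forall>i. x i \<in> S \<and> y i \<in> S) \<longrightarrow> ldiv S m (t1 x y) (t2 x y) \<in> S"
    using C1 C2 ldiv_in[OF L] by blast
  have uu: "ldiv S m u u = u" using ldiv_eq[OF L loop_unit[OF L] loop_unit[OF L]] loop_lu[OF L loop_unit[OF L]] by simp
  have lin: "\<forall>a c z w. (\<forall>i. a i \<in> S \<and> c i \<in> S \<and> z i \<in> Z \<and> w i \<in> Z) \<longrightarrow>
         ldiv S m (t1 (\<lambda>i. m (a i) (z i)) (\<lambda>i. m (c i) (w i))) (t2 (\<lambda>i. m (a i) (z i)) (\<lambda>i. m (c i) (w i)))
          = m (m (ldiv S m (t1 a c) (t2 a c)) (ldiv S m (L1 z) (L2 z))) (ldiv S m (M1 w) (M2 w))"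
  proof (intro allI impI)
    fix a c z w :: "nat \<Rightarrow> 'a" assume h: "\<forall>i. a i \<in> S \<and> c i \<in> S \<and> z i \<in> Z \<and> w i \<in> Z"
    define p1 where "p1 = t1 a c" define p2 where "p2 = t2 a c"
    define l1 where "l1 = L1 z" define l2 where "l2 = L2 z"
    define m1 where "m1 = M1 w" define m2 where "m2 = M2 w"
    have p: "p1 \<in> S" "p2 \<in> S" using C1 C2 h unfolding p1_def p2_def by auto
    have k: "l1 \<in> Z" "l2 \<in> Z" "m1 \<in> Z" "m2 \<in> Z" using I1 I2 h unfolding l1_def l2_def m1_def m2_def by auto
    have e1: "t1 (\<lambda>i. m (a i) (z i)) (\<lambda>i. m (c i) (w i)) = m p1 (m l1 m1)"
      using I1(5) h cen_r[OF Zcen[OF k(3)] p(1) ZS[OF k(1)]] unfolding p1_def l1_def m1_def by simp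
    have e2: "t2 (\<lambda>i. m (a i) (z i)) (\<lambda>i. m (c i) (w i)) = m p2 (m l2 m2)"
      using I2(5) h cen_r[OF Zcen[OF k(4)] p(2) ZS[OF k(2)]] unfolding p2_def l2_def m2_def by simp
    define r0 where "r0 = ldiv S m p1 p2"
    define la where "la = ldiv S m l1 l2"
    define mu where "mu = ldiv S m m1 m2"
    have r0: "r0 \<in> S" "m p1 r0 = p2" using ldiv_in[OF L p] unfolding r0_def by auto
    have la: "la \<in> Z" "m l1 la = l2" using Zld[OF k(1,2)] unfolding la_def by auto
    have mu: "mu \<in> Z" "m m1 mu = m2" using Zld[OF k(3,4)] unfolding mu_def by auto
    have kZ: "m l1 m1 \<in> Z" "m la mu \<in> Z" using Zm k la mu by auto
    have "m (m p1 (m l1 m1)) (m (m r0 la) mu) = m (m p1 (m l1 m1)) (m r0 (m la mu))"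
      using cen_r[OF Zcen[OF mu(1)] r0(1) ZS[OF la(1)]] by simp
    also have "\<dots> = m (m p1 r0) (m (m l1 m1) (m la mu))"
      using cen4[OF L Zcen[OF kZ(1)] Zcen[OF kZ(2)] p(1) r0(1)] .
    also have "m (m l1 m1) (m la mu) = m (m l1 la) (m m1 mu)"
      using cen4[OF L Zcen[OF k(3)] Zcen[OF mu(1)] ZS[OF k(1)] ZS[OF la(1)]] .
    finally have eq: "m (m p1 (m l1 m1)) (m (m r0 la) mu) = m p2 (m l2 m2)" using r0 la mu by simp
    have inS: "m (m r0 la) mu \<in> S" "m p1 (m l1 m1) \<in> S"
      using loop_closed[OF L] r0 la mu ZS p k by auto
    show "ldiv S m (t1 (\<lambda>i. m (a i) (z i)) (\<lambda>i. m (c i) (w i))) (t2 (\<lambda>i. m (a i) (z i)) (\<lambda>i. m (c i) (w i)))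
          = m (m (ldiv S m (t1 a c) (t2 a c)) (ldiv S m (L1 z) (L2 z))) (ldiv S m (M1 w) (M2 w))"
      unfolding e1 e2 using ldiv_eq[OF L inS(2) inS(1) eq]
      unfolding r0_def la_def mu_def p1_def p2_def l1_def l2_def m1_def m2_def .
  qed
  show ?case
    apply (rule conjI)
    using clo apply simp
    apply (rule exI[of _ "\<lambda>z. ldiv S m (L1 z) (L2 z)"], rule exI[of _ "\<lambda>w. ldiv S m (M1 w) (M2 w)"])
    using lin I1 I2 Zld uu by auto
next
  case (rd t1 t2)
  obtain L1 M1 where I1: "\<forall>z. (\<forall>i. z i \<in> Z) \<longrightarrow> L1 z \<in> Z" "\<forall>w. (\<forall>i. w i \<in> Z) \<longrightarrow> M1 w \<in> Z"
      "L1 (\<lambda>_. u) = u" "M1 (\<lambda>_. u) = u"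
      "\<forall>a c z w. (\<forall>i. a i \<in> S \<and> c i \<in> S \<and> z i \<in> Z \<and> w i \<in> Z) \<longrightarrow>
         t1 (\<lambda>i. m (a i) (z i)) (\<lambda>i. m (c i) (w i)) = m (m (t1 a c) (L1 z)) (M1 w)"
    using rd(2) by blast
  obtain L2 M2 where I2: "\<forall>z. (\<forall>i. z i \<in> Z) \<longrightarrow> L2 z \<in> Z" "\<forall>w. (\<forall>i. w i \<in> Z) \<longrightarrow> M2 w \<in> Z"
      "L2 (\<lambda>_. u) = u" "M2 (\<lambda>_. u) = u"
      "\<forall>a c z w. (\<forall>i. a i \<in> S \<and> c i \<in> S \<and> z i \<in> Z \<and> w i \<in> Z) \<longrightarrow>
         t2 (\<lambda>i. m (a i) (z i)) (\<lambda>i. m (c i) (w i)) = m (m (t2 a c) (L2 z)) (M2 w)"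
    using rd(4) by blast
  have C1: "\<forall>x y. (\<forall>i. x i \<in> S \<and> y i \<in> S) \<longrightarrow> t1 x y \<in> S" using rd(2) by blast
  have C2: "\<forall>x y. (\<forall>i. x i \<in> S \<and> y i \<in> S) \<longrightarrow> t2 x y \<in> S" using rd(4) by blast
  have clo: "\<forall>x y. (\<forall>i. x i \<in> S \<and> y i \<in> S) \<longrightarrow> rdiv S m (t1 x y) (t2 x y) \<in> S"
    using C1 C2 rdiv_in[OF L] by blast
  have uu: "rdiv S m u u = u" using rdiv_eq[OF L loop_unit[OF L] loop_unit[OF L]] loop_lu[OF L loop_unit[OF L]] by simp
  have lin: "\<forall>a c z w. (\<forall>i. a i \<in> S \<and> c i \<in> S \<and> z i \<in> Z \<and> w i \<in> Z) \<longrightarrow>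
         rdiv S m (t1 (\<lambda>i. m (a i) (z i)) (\<lambda>i. m (c i) (w i))) (t2 (\<lambda>i. m (a i) (z i)) (\<lambda>i. m (c i) (w i)))
          = m (m (rdiv S m (t1 a c) (t2 a c)) (rdiv S m (L1 z) (L2 z))) (rdiv S m (M1 w) (M2 w))"
  proof (intro allI impI)
    fix a c z w :: "nat \<Rightarrow> 'a" assume h: "\<forall>i. a i \<in> S \<and> c i \<in> S \<and> z i \<in> Z \<and> w i \<in> Z"
    define p1 where "p1 = t1 a c" define p2 where "p2 = t2 a c"
    define l1 where "l1 = L1 z" define l2 where "l2 = L2 z"
    define m1 where "m1 = M1 w" define m2 where "m2 = M2 w"
    have p: "p1 \<in> S" "p2 \<in> S" using C1 C2 h unfolding p1_def p2_def by auto
    have k: "l1 \<in> Z" "l2 \<in> Z" "m1 \<in> Z" "m2 \<in> Z" using I1 I2 h unfolding l1_def l2_def m1_def m2_def by auto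
    have e1: "t1 (\<lambda>i. m (a i) (z i)) (\<lambda>i. m (c i) (w i)) = m p1 (m l1 m1)"
      using I1(5) h cen_r[OF Zcen[OF k(3)] p(1) ZS[OF k(1)]] unfolding p1_def l1_def m1_def by simp
    have e2: "t2 (\<lambda>i. m (a i) (z i)) (\<lambda>i. m (c i) (w i)) = m p2 (m l2 m2)"
      using I2(5) h cen_r[OF Zcen[OF k(4)] p(2) ZS[OF k(2)]] unfolding p2_def l2_def m2_def by simp
    define r0 where "r0 = rdiv S m p1 p2"
    define la where "la = rdiv S m l1 l2"
    define mu where "mu = rdiv S m m1 m2"
    have r0: "r0 \<in> S" "m r0 p2 = p1" using rdiv_in[OF L p(2) p(1)] unfolding r0_def by auto
    have la: "la \<in> Z" "m la l2 = l1" using Zrd[OF k(2,1)] unfolding la_def by auto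
    have mu: "mu \<in> Z" "m mu m2 = m1" using Zrd[OF k(4,3)] unfolding mu_def by auto
    have kZ: "m l2 m2 \<in> Z" "m la mu \<in> Z" using Zm k la mu by auto
    have "m (m (m r0 la) mu) (m p2 (m l2 m2)) = m (m r0 (m la mu)) (m p2 (m l2 m2))"
      using cen_r[OF Zcen[OF mu(1)] r0(1) ZS[OF la(1)]] by simp
    also have "\<dots> = m (m r0 p2) (m (m la mu) (m l2 m2))"
      using cen4[OF L Zcen[OF kZ(2)] Zcen[OF kZ(1)] r0(1) p(2)] .
    also have "m (m la mu) (m l2 m2) = m (m la l2) (m mu m2)"
      using cen4[OF L Zcen[OF mu(1)] Zcen[OF k(4)] ZS[OF la(1)] ZS[OF k(2)]] .
    finally have eq: "m (m (m r0 la) mu) (m p2 (m l2 m2)) = m p1 (m l1 m1)" using r0 la mu by simp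
    have inS: "m (m r0 la) mu \<in> S" "m p2 (m l2 m2) \<in> S"
      using loop_closed[OF L] r0 la mu ZS p k by auto
    show "rdiv S m (t1 (\<lambda>i. m (a i) (z i)) (\<lambda>i. m (c i) (w i))) (t2 (\<lambda>i. m (a i) (z i)) (\<lambda>i. m (c i) (w i)))
          = m (m (rdiv S m (t1 a c) (t2 a c)) (rdiv S m (L1 z) (L2 z))) (rdiv S m (M1 w) (M2 w))"
      unfolding e1 e2 using rdiv_eq[OF L inS(2) inS(1) eq]
      unfolding r0_def la_def mu_def p1_def p2_def l1_def l2_def m1_def m2_def .
  qed
  show ?case
    apply (rule conjI)
    using clo apply simp
    apply (rule exI[of _ "\<lambda>z. rdiv S m (L1 z) (L2 z)"], rule exI[of _ "\<lambda>w. rdiv S m (M1 w) (M2 w)"])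
    using lin I1 I2 Zrd uu by auto
qed

lemma central_abelian: "abelian_congruence S m u (induced_cong S m Z)"
proof -
  let ?a = "induced_cong S m Z"
  have aZ: "a\<in>S \<and> b\<in>S \<and> (\<exists>z\<in>Z. b = m a z)" if "(a,b) \<in> ?a" for a b
  proof -
    have ab: "a\<in>S" "b\<in>S" "lcoset m a Z = lcoset m b Z" using that unfolding induced_cong_def by auto
    have "b \<in> lcoset m b Z" unfolding lcoset_def using uZ loop_ru[OF L ab(2)] by force
    then show ?thesis using ab unfolding lcoset_def by auto
  qed
  have cong: "loop_congruence S m (Id_on S)"
    unfolding loop_congruence_def
  proof (intro conjI allI impI)
    show "equiv S (Id_on S)" unfolding equiv_def refl_on_def sym_def trans_def by auto
    fix a b c d assume "(a, b) \<in> Id_on S" "(c, d) \<in> Id_on S"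
    then have "a\<in>S" "c\<in>S" "b = a" "d = c" by auto
    then show "(m a c, m b d) \<in> Id_on S" "(ldiv S m a c, ldiv S m b d) \<in> Id_on S"
      "(rdiv S m a c, rdiv S m b d) \<in> Id_on S"
      using loop_closed[OF L] ldiv_in[OF L] rdiv_in[OF L, of c a] by auto
  qed
  have cen: "centralizes S m u ?a ?a (Id_on S)"
    unfolding centralizes_def
  proof (intro ballI allI impI)
    fix t a b c d
    assume t: "t \<in> loop_terms S m u"
      and h: "\<forall>i. a i \<in> S \<and> b i \<in> S \<and> c i \<in> S \<and> d i \<in> S \<and> (a i, b i) \<in> ?a \<and> (c i, d i) \<in> ?a"
      and eq: "(t a c, t a d) \<in> Id_on S"
    have "\<forall>i. \<exists>z. z \<in> Z \<and> b i = m (a i) z" using h aZ by blast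
    then obtain z where z: "\<forall>i. z i \<in> Z \<and> b i = m (a i) (z i)" by metis
    have "\<forall>i. \<exists>w. w \<in> Z \<and> d i = m (c i) w" using h aZ by blast
    then obtain w where w: "\<forall>i. w i \<in> Z \<and> d i = m (c i) (w i)" by metis
    obtain Lf Mf where T: "\<forall>z. (\<forall>i. z i \<in> Z) \<longrightarrow> Lf z \<in> Z" "\<forall>w. (\<forall>i. w i \<in> Z) \<longrightarrow> Mf w \<in> Z"
      "Lf (\<lambda>_. u) = u" "Mf (\<lambda>_. u) = u"
      "\<forall>a c z w. (\<forall>i. a i \<in> S \<and> c i \<in> S \<and> z i \<in> Z \<and> w i \<in> Z) \<longrightarrow>
         t (\<lambda>i. m (a i) (z i)) (\<lambda>i. m (c i) (w i)) = m (m (t a c) (Lf z)) (Mf w)"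
      using term_lin[OF t] by blast
    have clo: "\<forall>x y. (\<forall>i. x i \<in> S \<and> y i \<in> S) \<longrightarrow> t x y \<in> S" using term_lin[OF t] by blast
    have tac: "t a c \<in> S" using clo h by blast
    have LZ': "Lf z \<in> Z" "Mf w \<in> Z" using T z w by auto
    have a_eq: "(\<lambda>i. m (a i) u) = a" "(\<lambda>i. m (c i) u) = c" using h loop_ru[OF L] by auto
    have b_eq: "b = (\<lambda>i. m (a i) (z i))" "d = (\<lambda>i. m (c i) (w i))" using z w by auto
    have hyp: "\<forall>i. a i \<in> S \<and> c i \<in> S \<and> u \<in> Z \<and> w i \<in> Z" "\<forall>i. a i \<in> S \<and> c i \<in> S \<and> z i \<in> Z \<and> u \<in> Z"
      "\<forall>i. a i \<in> S \<and> c i \<in> S \<and> z i \<in> Z \<and> w i \<in> Z" using h z w uZ by auto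
    have "t (\<lambda>i. m (a i) u) (\<lambda>i. m (c i) (w i)) = m (m (t a c) (Lf (\<lambda>_. u))) (Mf w)"
      using T(5)[rule_format, of a c "\<lambda>_. u" w] hyp(1) by simp
    then have "t a d = m (m (t a c) u) (Mf w)"
      unfolding T(3) a_eq b_eq .
    then have "t a d = m (t a c) (Mf w)" using loop_ru[OF L tac] by simp
    moreover have "t a d = t a c" using eq by auto
    ultimately have "m (t a c) (Mf w) = m (t a c) u" using loop_ru[OF L tac] by simp
    then have Mw: "Mf w = u" using loop_lcancel[OF L tac ZS[OF LZ'(2)] loop_unit[OF L]] by blast
    have "t (\<lambda>i. m (a i) (z i)) (\<lambda>i. m (c i) u) = m (m (t a c) (Lf z)) (Mf (\<lambda>_. u))"
      using T(5)[rule_format, of a c z "\<lambda>_. u"] hyp(2) by simp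
    then have "t b c = m (m (t a c) (Lf z)) u"
      unfolding T(4) a_eq b_eq .
    moreover have "t b d = m (m (t a c) (Lf z)) (Mf w)"
      using T(5)[rule_format, of a c z w] hyp(3) b_eq by simp
    ultimately have "t b c = t b d" using Mw by simp
    moreover have "t b c \<in> S" using clo h by blast
    ultimately show "(t b c, t b d) \<in> Id_on S" by auto
  qed
  have "commutator S m u ?a ?a \<subseteq> Id_on S"
    unfolding commutator_def using cong cen by blast
  moreover have "Id_on S \<subseteq> commutator S m u ?a ?a"
    unfolding commutator_def loop_congruence_def equiv_def refl_on_def by auto
  ultimately show ?thesis unfolding abelian_congruence_def by blast
qed

end


lemma not_abelianI:
  assumes t: "t \<in> loop_terms S m u"
    and h: "\<forall>i. a i \<in> S \<and> b i \<in> S \<and> c i \<in> S \<and> d i \<in> S \<and> (a i, b i) \<in> \<alpha> \<and> (c i, d i) \<in> \<alpha>"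
    and eq: "t a c = t a d" "t a c \<in> S" and ne: "t b c \<noteq> t b d"
  shows "\<not> abelian_congruence S m u \<alpha>"
proof -
  have "(t b c, t b d) \<in> commutator S m u \<alpha> \<alpha>"
    unfolding commutator_def
  proof (rule InterI)
    fix \<delta> assume "\<delta> \<in> {\<delta>. loop_congruence S m \<delta> \<and> centralizes S m u \<alpha> \<alpha> \<delta>}"
    then have d: "equiv S \<delta>" "centralizes S m u \<alpha> \<alpha> \<delta>" unfolding loop_congruence_def by auto
    have "(t a c, t a d) \<in> \<delta>" using d(1) eq unfolding equiv_def refl_on_def by auto
    then show "(t b c, t b d) \<in> \<delta>" using d(2) t h unfolding centralizes_def by blast
  qed
  then show ?thesis unfolding abelian_congruence_def using ne by auto
qed



locale qs =
  fixes e :: "'a::ab_group_add" and B :: "'a set" and qb :: "'a set \<Rightarrow> 'a"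
  assumes B0: "0 \<in> B" and Badd: "\<forall>x\<in>B. \<forall>y\<in>B. x + y \<in> B" and Bneg: "\<forall>x\<in>B. - x \<in> B"
    and e0: "e \<noteq> 0" and ee: "e + e = 0" and eB: "e \<in> B" and two: "\<forall>u. u + u \<in> B"
    and qf: "is_quadratic_form e B qb"
begin

definition E :: "bool \<Rightarrow> 'a" where "E p = (if p then e else 0)"
definition NF :: "'a \<Rightarrow> bool \<Rightarrow> 'a" where "NF x p = x + E p"
definition Qb :: "'a \<Rightarrow> bool" where "Qb u = (qlift B qb u = e)"
definition Hb :: "'a \<Rightarrow> 'a \<Rightarrow> bool" where "Hb u v = (hlift B qb u v = e)"

lemma Badd': "x\<in>B \<Longrightarrow> y\<in>B \<Longrightarrow> x + y \<in> B" using Badd by blast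
lemma Bneg': "x\<in>B \<Longrightarrow> - x \<in> B" using Bneg by blast
lemma Bdiff: "x\<in>B \<Longrightarrow> y\<in>B \<Longrightarrow> x - y \<in> B" unfolding diff_conv_add_uminus using Badd' Bneg' by blast

lemma E_simps[simp]: "E False = 0" "E True = e" by (simp_all add: E_def)
lemma E_add: "E p + E q = E (p \<noteq> q)" using ee by (cases p; cases q) simp_all
lemma e0': "0 \<noteq> e" using e0 by metis
lemma E_inj: "E p = E q \<longleftrightarrow> (p \<longleftrightarrow> q)" using e0 e0' by (cases p; cases q) simp_all
lemma E_B: "E p \<in> B" using B0 eB by (cases p) simp_all
lemma E_uminus: "- E p = E p" using ee by (cases p) (simp_all add: add_eq_0_iff)
lemma E_diff: "E p - E q = E (p \<noteq> q)" unfolding diff_conv_add_uminus E_uminus E_add ..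
lemma F2_E: "F2mul e (E p) (E q) = E (p \<and> q)" using e0 by (cases p; cases q) (simp_all add: F2mul_def)
lemma F_cases: "i \<in> {0, e} \<Longrightarrow> i = E (i = e)" using e0 by auto
lemma E_F: "E p \<in> {0, e}" by (cases p) auto
lemma NF_False: "NF x False = x" by (simp add: NF_def)
lemma NF_eqI: "x = y \<Longrightarrow> (p \<longleftrightarrow> q) \<Longrightarrow> NF x p = NF y q" by simp

lemma coset_mem: "u \<in> coset B u" unfolding coset_def using B0 by force
lemma coset_eq_iff: "coset B u = coset B v \<longleftrightarrow> u - v \<in> B"
proof
  assume h: "coset B u = coset B v"
  have "u \<in> coset B v" using coset_mem h by blast
  then obtain b where "b\<in>B" "u = v + b" unfolding coset_def by blast
  then show "u - v \<in> B" by simp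
next
  assume h: "u - v \<in> B"
  show "coset B u = coset B v"
  proof
    show "coset B u \<subseteq> coset B v"
    proof
      fix x assume "x \<in> coset B u"
      then obtain b where b: "b\<in>B" "x = u + b" unfolding coset_def by blast
      then have "x = v + ((u - v) + b)" by simp
      then show "x \<in> coset B v" unfolding coset_def using Badd' h b by blast
    qed
  next
    show "coset B v \<subseteq> coset B u"
    proof
      fix x assume "x \<in> coset B v"
      then obtain b where b: "b\<in>B" "x = v + b" unfolding coset_def by blast
      then have "x = u + (- (u - v) + b)" by simp
      then show "x \<in> coset B u" unfolding coset_def using Badd' Bneg' h b by blast
    qed
  qed
qed

lemma coset_add_B: "b \<in> B \<Longrightarrow> coset B (u + b) = coset B u"
  unfolding coset_eq_iff by simp
lemma coset0: "coset B 0 = B" unfolding coset_def by simp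
lemma coset_B_iff: "coset B u = B \<longleftrightarrow> u \<in> B" using coset_eq_iff[of u 0] coset0 by simp
lemma coset_in: "coset B u \<in> cosets B" unfolding cosets_def by blast
lemma cosetsE: "U \<in> cosets B \<Longrightarrow> (\<And>u. U = coset B u \<Longrightarrow> P) \<Longrightarrow> P" unfolding cosets_def by blast
lemma B_cosets: "B \<in> cosets B" using coset_in[of 0] coset0 by simp

lemma cadd_coset: "cadd (coset B u) (coset B v) = coset B (u + v)"
proof
  show "cadd (coset B u) (coset B v) \<subseteq> coset B (u + v)"
  proof
    fix x assume "x \<in> cadd (coset B u) (coset B v)"
    then obtain b1 b2 where b: "b1\<in>B" "b2\<in>B" "x = (u + b1) + (v + b2)" unfolding cadd_def coset_def by blast
    then have "x = (u + v) + (b1 + b2)" by (simp add: algebra_simps)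
    then show "x \<in> coset B (u + v)" unfolding coset_def using Badd' b by blast
  qed
next
  show "coset B (u + v) \<subseteq> cadd (coset B u) (coset B v)"
  proof
    fix x assume "x \<in> coset B (u + v)"
    then obtain b where b: "b\<in>B" "x = u + v + b" unfolding coset_def by blast
    have "x = (u + b) + (v + 0)" using b by (simp add: algebra_simps)
    then show "x \<in> cadd (coset B u) (coset B v)" unfolding cadd_def coset_def using b B0 by blast
  qed
qed

lemma cadd_comm: "cadd U V = cadd V U" unfolding cadd_def by (auto; metis add.commute)

lemma csmul_e: "csmul e B e U = U" by (simp add: csmul_def)
lemma csmul_0: "csmul e B 0 U = B" using e0 by (simp add: csmul_def)

lemma qbB: "qb B = 0"
proof -
  have "qb (csmul e B 0 B) = F2mul e (F2mul e 0 0) (qb B)" using qf B_cosets unfolding is_quadratic_form_def by blast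
  then show ?thesis using e0 by (simp add: csmul_0 F2mul_def)
qed

lemma qb_vals: "U \<in> cosets B \<Longrightarrow> qb U \<in> {0, e}" using qf unfolding is_quadratic_form_def by blast

lemma qlift_E: "qlift B qb u = E (Qb u)"
proof -
  have "qlift B qb u \<in> {0, e}" unfolding qlift_def using qb_vals coset_in by blast
  then show ?thesis unfolding Qb_def using F_cases by blast
qed

lemma hlift_eq: "hlift B qb u v = qlift B qb (u + v) - qlift B qb u - qlift B qb v"
  unfolding hlift_def qlift_def assoc_bilin_def cadd_coset ..

lemma hlift_E: "hlift B qb u v = E (Hb u v)"
proof -
  have "hlift B qb u v = E ((Qb (u+v) \<noteq> Qb u) \<noteq> Qb v)" unfolding hlift_eq qlift_E E_diff ..
  then show ?thesis unfolding Hb_def by (simp add: e0 E_def)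
qed

lemma Hb_def2: "Hb u v = ((Qb (u+v) \<noteq> Qb u) \<noteq> Qb v)"
proof -
  have "E (Hb u v) = E ((Qb (u+v) \<noteq> Qb u) \<noteq> Qb v)" unfolding hlift_E[symmetric] hlift_eq qlift_E E_diff ..
  then show ?thesis unfolding E_inj .
qed

lemma Qb_add: "Qb (u + v) = ((Hb u v \<noteq> Qb u) \<noteq> Qb v)" unfolding Hb_def2 by auto

lemma Qb_B: "b \<in> B \<Longrightarrow> Qb (u + b) = Qb u" unfolding Qb_def qlift_def coset_add_B by simp
lemma Qb_B0: "b \<in> B \<Longrightarrow> Qb b = False"
proof -
  assume "b \<in> B"
  then have "coset B b = B" using coset_B_iff by blast
  then show ?thesis unfolding Qb_def qlift_def using e0' by (simp add: qbB)
qed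
lemma Hb_sym: "Hb u v = Hb v u" unfolding Hb_def2 add.commute[of v u] by auto
lemma Hb_B1: "b \<in> B \<Longrightarrow> Hb (u + b) v = Hb u v"
  unfolding Hb_def2 using Qb_B[of b u] Qb_B[of b "u + v"] by (simp add: algebra_simps)
lemma Hb_B2: "b \<in> B \<Longrightarrow> Hb v (u + b) = Hb v u" using Hb_B1 Hb_sym by metis
lemma Hb_B0: "b \<in> B \<Longrightarrow> Hb b v = False"
  using Hb_B1[of b 0 v] unfolding Hb_def2 by (simp add: Qb_B0[OF B0])
lemma Hb_self: "Hb u u = False"
  unfolding Hb_def2 using Qb_B0[OF two[rule_format, of u]] by simp

lemma Hb_add1: "Hb (u + v) w = (Hb u w \<noteq> Hb v w)"
proof -
  have "assoc_bilin qb (cadd (coset B u) (coset B v)) (coset B w)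
     = assoc_bilin qb (coset B u) (coset B w) + assoc_bilin qb (coset B v) (coset B w)"
    using qf coset_in unfolding is_quadratic_form_def by blast
  then have "hlift B qb (u + v) w = hlift B qb u w + hlift B qb v w"
    unfolding hlift_def cadd_coset .
  then show ?thesis unfolding hlift_E E_add E_inj .
qed
lemma Hb_add2: "Hb w (u + v) = (Hb w u \<noteq> Hb w v)" using Hb_add1 Hb_sym by metis

lemma Qb_E: "Qb (x + E p) = Qb x" using Qb_B E_B by blast
lemma Hb_E1: "Hb (x + E p) y = Hb x y" using Hb_B1 E_B by blast
lemma Hb_E2: "Hb y (x + E p) = Hb y x" using Hb_B2 E_B by blast

lemma Qmul_NF: "Qmul e B qb (E a, NF x p) (E b, NF y q)
   = (E (a \<noteq> b), NF (x + y) ((p \<noteq> q) \<noteq> ((b \<and> Qb x) \<noteq> (a \<and> Hb x y))))"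
proof -
  have "x + E p + (y + E q) + E (b \<and> Qb x) + E (a \<and> Hb x y)
     = (x + y) + (((E p + E q) + E (b \<and> Qb x)) + E (a \<and> Hb x y))" by (simp add: algebra_simps)
  moreover have "Qmul e B qb (E a, NF x p) (E b, NF y q) =
     (E a + E b, x + E p + (y + E q) + E (b \<and> Qb x) + E (a \<and> Hb x y))"
    unfolding Qmul_def NF_def by (simp add: qlift_E hlift_E F2_E Qb_E Hb_E1 Hb_E2)
  ultimately show ?thesis unfolding NF_def E_add by (simp add: E_inj, blast)
qed


abbreviation "S \<equiv> Qcar e"
abbreviation "M \<equiv> Qmul e B qb"

lemma Qcar_cases: assumes "x \<in> S" obtains a u where "x = (E a, NF u False)"
proof -
  obtain i u where "x = (i, u)" "i \<in> {0, e}" using assms unfolding Qcar_def by auto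
  then have "x = (E (i = e), NF u False)" using F_cases NF_False by metis
  then show ?thesis using that by blast
qed

lemma Qcar_E[simp]: "(E a, y) \<in> S" unfolding Qcar_def using E_F by auto
lemma Qcar_0e[simp]: "(0, y) \<in> S" "(e, y) \<in> S" unfolding Qcar_def by auto

lemma NF_diff: "NF x p = NF y q \<Longrightarrow> x = y + E (p \<noteq> q)"
proof -
  assume "NF x p = NF y q"
  then have "x = y + E q - E p" unfolding NF_def by (simp add: algebra_simps)
  also have "\<dots> = y + (E q - E p)" by (simp add: algebra_simps)
  also have "\<dots> = y + E (p \<noteq> q)" unfolding E_diff by (cases p; cases q) auto
  finally show ?thesis .
qed

lemma NF_same: "NF x p = NF y p \<Longrightarrow> x = y" unfolding NF_def by simp

lemma pair_eq: "(a \<longleftrightarrow> b) \<Longrightarrow> x = y \<Longrightarrow> (p \<longleftrightarrow> q) \<Longrightarrow> (E a, NF x p) = (E b, NF y q)" by simp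

lemma Q_loop: "loop S M (0, 0)"
  unfolding loop_iff
proof (intro conjI ballI)
  show "(0, 0) \<in> S" using Qcar_E[of False] by simp
next
  fix x y assume "x \<in> S" "y \<in> S"
  then obtain a u b v where xy: "x = (E a, NF u False)" "y = (E b, NF v False)"
    by (metis Qcar_cases)
  show "M x y \<in> S" unfolding xy Qmul_NF by simp
  show "\<exists>z\<in>S. M x z = y"
  proof
    let ?z = "(E (a \<noteq> b), NF (v - u) (((a \<noteq> b) \<and> Qb u) \<noteq> (a \<and> Hb u (v - u))))"
    show "M x ?z = y" unfolding xy Qmul_NF by (rule pair_eq) auto
  qed simp
  show "\<exists>z\<in>S. M z x = y"
  proof
    let ?z = "(E (a \<noteq> b), NF (v - u) ((a \<and> Qb (v - u)) \<noteq> ((a \<noteq> b) \<and> Hb (v - u) u)))"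
    show "M ?z x = y" unfolding xy Qmul_NF by (rule pair_eq) auto
  qed simp
next
  fix x assume "x \<in> S"
  then obtain a u where xy: "x = (E a, NF u False)" by (metis Qcar_cases)
  have z: "(0, 0) = (E False, NF 0 False)" by (simp add: NF_False)
  show "M (0, 0) x = x" "M x (0, 0) = x" unfolding xy z Qmul_NF
    by (rule pair_eq; simp add: Qb_B0[OF B0] Hb_B0[OF B0] Hb_sym[of u 0])+
next
  fix x y z assume "x \<in> S" "y \<in> S" "z \<in> S"
  then obtain a u b v c w where xy: "x = (E a, NF u False)" "y = (E b, NF v False)" "z = (E c, NF w False)"
    by (metis Qcar_cases)
  show "M x y = M x z \<longrightarrow> y = z"
  proof
    assume "M x y = M x z"
    then have h: "a \<noteq> b \<longleftrightarrow> a \<noteq> c" "NF (u + v) ((b \<and> Qb u) \<noteq> (a \<and> Hb u v)) = NF (u + w) ((c \<and> Qb u) \<noteq> (a \<and> Hb u w))"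
      unfolding xy Qmul_NF by (simp_all add: E_inj)
    have bc: "b = c" using h(1) by blast
    from NF_diff[OF h(2)] have vw: "v = w + E (((b \<and> Qb u) \<noteq> (a \<and> Hb u v)) \<noteq> ((c \<and> Qb u) \<noteq> (a \<and> Hb u w)))"
      by (simp add: algebra_simps)
    then have "Hb u v = Hb u w" using Hb_E2 by metis
    then have "v = w" using h(2) bc unfolding NF_def by simp
    then show "y = z" using xy bc by simp
  qed
  show "M y x = M z x \<longrightarrow> y = z"
  proof
    assume "M y x = M z x"
    then have h: "b \<noteq> a \<longleftrightarrow> c \<noteq> a" "NF (v + u) ((a \<and> Qb v) \<noteq> (b \<and> Hb v u)) = NF (w + u) ((a \<and> Qb w) \<noteq> (c \<and> Hb w u))"
      unfolding xy Qmul_NF by (simp_all add: E_inj)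
    have bc: "b = c" using h(1) by blast
    from NF_diff[OF h(2)] have vw: "v = w + E (((a \<and> Qb v) \<noteq> (b \<and> Hb v u)) \<noteq> ((a \<and> Qb w) \<noteq> (c \<and> Hb w u)))"
      by (simp add: algebra_simps)
    then have "Hb v u = Hb w u" "Qb v = Qb w" using Hb_E1 Qb_E by metis+
    then have "v = w" using h(2) bc unfolding NF_def by simp
    then show "y = z" using xy bc by simp
  qed
qed


lemma Qb_0[simp]: "Qb 0 = False" using Qb_B0[OF B0] .
lemma Hb_0[simp]: "Hb 0 x = False" "Hb x 0 = False" using Hb_B0[OF B0] Hb_sym by metis+

lemmas expand = Qb_add Hb_add1 Hb_add2 Hb_self

lemma assoc_diff:
  "M (M (E a, NF u False) (E b, NF v False)) (E c, NF w False)
   = M (M (E a, NF u False) (M (E b, NF v False) (E c, NF w False))) (E False, NF 0 (((c \<and> Hb u v) \<noteq> (a \<and> Hb v w)) \<noteq> (b \<and> Hb u w)))"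
  unfolding Qmul_NF
  apply (rule pair_eq)
    apply blast
   apply (simp add: algebra_simps)
  apply (simp add: expand Hb_sym[of v u] Hb_sym[of w u] Hb_sym[of w v])
  by argo

lemma extra_law:
  "M (E a, NF u False) (M (E b, NF v False) (M (E c, NF w False) (E a, NF u False)))
   = M (M (M (E a, NF u False) (E b, NF v False)) (E c, NF w False)) (E a, NF u False)"
  unfolding Qmul_NF
  apply (rule pair_eq)
    apply blast
   apply (simp add: algebra_simps)
  apply (simp add: expand Hb_sym[of v u] Hb_sym[of w u] Hb_sym[of w v])
  by argo


lemma Q_extra: "extra_loop S M (0, 0)"
  unfolding extra_loop_def
proof (intro conjI ballI)
  show "loop S M (0, 0)" by (rule Q_loop)
  fix x y z assume "x \<in> S" "y \<in> S" "z \<in> S"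
  then obtain a u b v c w where xy: "x = (E a, NF u False)" "y = (E b, NF v False)" "z = (E c, NF w False)"
    by (metis Qcar_cases)
  show "M x (M y (M z x)) = M (M (M x y) z) x" unfolding xy by (rule extra_law)
qed

lemma zero_NF: "(0, 0) = (E False, NF 0 False)" by (simp add: NF_False)

lemma assoc_iff_Hb: "(\<forall>x\<in>S. \<forall>y\<in>S. \<forall>z\<in>S. M x (M y z) = M (M x y) z) \<longleftrightarrow> (\<forall>u v. \<not> Hb u v)"
proof
  assume as: "\<forall>x\<in>S. \<forall>y\<in>S. \<forall>z\<in>S. M x (M y z) = M (M x y) z"
  show "\<forall>u v. \<not> Hb u v"
  proof (intro allI)
    fix u v
    let ?P = "M (E False, NF u False) (M (E False, NF v False) (E True, NF 0 False))"
    have P: "?P \<in> S" unfolding Qmul_NF by simp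
    have "M ?P (E False, NF 0 (Hb u v)) = ?P"
      using assoc_diff[of False u False v True 0] as by simp
    also have "\<dots> = M ?P (0, 0)" using loop_ru[OF Q_loop P] by simp
    finally have "(E False, NF 0 (Hb u v)) = (0, 0)"
      by (rule loop_lcancel[OF Q_loop P Qcar_E loop_unit[OF Q_loop]])
    then have "E (Hb u v) = E False" unfolding NF_def by simp
    then show "\<not> Hb u v" unfolding E_inj by simp
  qed
next
  assume h: "\<forall>u v. \<not> Hb u v"
  show "\<forall>x\<in>S. \<forall>y\<in>S. \<forall>z\<in>S. M x (M y z) = M (M x y) z"
  proof (intro ballI)
    fix x y z assume "x \<in> S" "y \<in> S" "z \<in> S"
    then obtain a u b v c w where xy: "x = (E a, NF u False)" "y = (E b, NF v False)" "z = (E c, NF w False)"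
      by (metis Qcar_cases)
    have P: "M x (M y z) \<in> S" unfolding xy Qmul_NF by simp
    show "M x (M y z) = M (M x y) z"
      unfolding xy assoc_diff[of a u b v c w] using h loop_ru[OF Q_loop P] unfolding xy zero_NF by simp
  qed
qed

lemma linear_iff_Hb: "is_linear_form e B qb \<longleftrightarrow> (\<forall>u v. \<not> Hb u v)"
proof
  assume lin: "is_linear_form e B qb"
  show "\<forall>u v. \<not> Hb u v"
  proof (intro allI)
    fix u v
    have "qb (cadd (coset B u) (coset B v)) = qb (coset B u) + qb (coset B v)"
      using lin coset_in unfolding is_linear_form_def by blast
    then have "hlift B qb u v = 0" unfolding hlift_def assoc_bilin_def by simp
    then show "\<not> Hb u v" unfolding Hb_def using e0' by simp
  qed
next
  assume h: "\<forall>u v. \<not> Hb u v"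
  show "is_linear_form e B qb" unfolding is_linear_form_def
  proof (intro conjI ballI)
    fix U V assume "U \<in> cosets B" "V \<in> cosets B"
    then obtain u v where uv: "U = coset B u" "V = coset B v" by (metis cosetsE)
    have "qlift B qb (u + v) = qlift B qb u + qlift B qb v"
      unfolding qlift_E E_add Qb_add using h by simp
    then show "qb (cadd U V) = qb U + qb V" unfolding uv cadd_coset qlift_def .
  next
    fix l U assume l: "l \<in> {0, e}" and U: "U \<in> cosets B"
    show "qb (csmul e B l U) = F2mul e l (qb U)"
    proof (cases "l = e")
      case True
      then show ?thesis using qb_vals[OF U] e0 by (auto simp: csmul_e F2mul_def)
    next
      case False
      then have "l = 0" using l by auto
      then show ?thesis using e0 by (simp add: csmul_0 qbB F2mul_def)
    qed
  qed
qed

lemma group_iff_linear: "is_group S M (0, 0) \<longleftrightarrow> is_linear_form e B qb"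
  unfolding is_group_def linear_iff_Hb assoc_iff_Hb[symmetric] using Q_loop by blast


lemma comm_loop: "is_comm_group T f u \<Longrightarrow> loop T f u" unfolding is_comm_group_def is_group_def by blast

lemma F_comm: "is_comm_group {0, e} (+) 0"
  by (rule comm_groupI) (use ee in \<open>auto simp: algebra_simps\<close>)

lemma B_comm: "is_comm_group B (+) 0"
proof (rule comm_groupI)
  show "\<And>x. x \<in> B \<Longrightarrow> \<exists>y\<in>B. x + y = 0" using Bneg' by (metis add.right_inverse)
qed (use B0 Badd' in \<open>auto simp: algebra_simps\<close>)

lemma W_comm: "is_comm_group (UNIV :: 'a set) (+) 0"
proof (rule comm_groupI)
  show "\<And>x. x \<in> UNIV \<Longrightarrow> \<exists>y\<in>UNIV. x + y = (0::'a)" by (metis UNIV_I add.right_inverse)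
qed (auto simp: algebra_simps)

lemma fst_M: "fst (M p q) = fst p + fst q" unfolding Qmul_def by (simp add: case_prod_beta)

lemma M_00: "M (0, x) (0, y) = (0, x + y)" unfolding Qmul_def F2mul_def using e0' by simp

lemma X_comm_gen: assumes "is_comm_group T (+) 0" shows "is_comm_group ({0} \<times> T) M (0, 0)"
proof -
  interpret iso T "(+)" "{0} \<times> T" M "Pair 0"
  proof
    show "bij_betw (Pair 0) T ({0} \<times> T)" unfolding bij_betw_def inj_on_def by auto
  qed (simp add: M_00)
  show ?thesis using comm_group_tr[OF assms] by simp
qed

lemma X_comm: "is_comm_group ({0} \<times> UNIV) M (0, 0)" using X_comm_gen[OF W_comm] .
lemma N1_comm: "is_comm_group ({0} \<times> B) M (0, 0)" using X_comm_gen[OF B_comm] .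

lemma X_normal: "normal_subloop S M (0, 0) ({0} \<times> UNIV)"
proof -
  have H: "loop_hom S M {0, e} (+) fst" unfolding loop_hom_def fst_M Qcar_def by auto
  have s: "fst ` S = {0, e}" unfolding Qcar_def by auto
  have "{x\<in>S. fst x = 0} = {0} \<times> UNIV" unfolding Qcar_def by auto
  then show ?thesis using normal_subloopI[OF comm_loop[OF F_comm] H s] by simp
qed

lemma lcoset_X: assumes p: "p \<in> S" shows "lcoset M p ({0} \<times> UNIV) = {fst p} \<times> UNIV"
proof
  show "lcoset M p ({0} \<times> UNIV) \<subseteq> {fst p} \<times> UNIV"
  proof
    fix q assume "q \<in> lcoset M p ({0} \<times> UNIV)"
    then obtain n where n: "n \<in> {0} \<times> (UNIV :: 'a set)" "q = M p n" unfolding lcoset_def by blast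
    then have "fst q = fst p" using fst_M[of p n] by auto
    then show "q \<in> {fst p} \<times> UNIV" by (cases q) auto
  qed
next
  show "{fst p} \<times> UNIV \<subseteq> lcoset M p ({0} \<times> UNIV)"
  proof
    fix q assume q: "q \<in> {fst p} \<times> (UNIV :: 'a set)"
    have qS: "q \<in> S" using p q unfolding Qcar_def by auto
    obtain y where y: "y \<in> S" "M p y = q" using loop_lsol[OF Q_loop p qS] by blast
    then have "fst (M p y) = fst p" using q by auto
    then have "fst p + fst y = fst p" unfolding fst_M .
    then have "fst y = 0" by simp
    then have "y \<in> {0} \<times> UNIV" by (cases y) auto
    then show "q \<in> lcoset M p ({0} \<times> UNIV)" unfolding lcoset_def using y by blast
  qed
qed

lemma tval: "ldiv S M (M (E True, NF 0 False) (M (E False, NF v False) (E False, NF w False)))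
   (M (M (E True, NF 0 False) (E False, NF v False)) (E False, NF w False)) = (E False, NF 0 (Hb v w))"
proof -
  have "M (M (E True, NF 0 False) (E False, NF v False)) (E False, NF w False) =
      M (M (E True, NF 0 False) (M (E False, NF v False) (E False, NF w False))) (E False, NF 0 (Hb v w))"
    unfolding assoc_diff by simp
  moreover have "M (E True, NF 0 False) (M (E False, NF v False) (E False, NF w False)) \<in> S"
    unfolding Qmul_NF by simp
  ultimately show ?thesis using ldiv_eq[OF Q_loop _ Qcar_E] by metis
qed

lemma not_abelian_X:
  assumes ng: "\<not> is_group S M (0, 0)"
  shows "\<not> abelian_congruence S M (0, 0) (induced_cong S M ({0} \<times> UNIV))"
proof -
  obtain u0 v0 where H: "Hb u0 v0" using ng assoc_iff_Hb Q_loop unfolding is_group_def by blast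
  define t :: "(nat \<Rightarrow> 'a \<times> 'a) \<Rightarrow> (nat \<Rightarrow> 'a \<times> 'a) \<Rightarrow> 'a \<times> 'a" where
    "t = (\<lambda>x y. ldiv S M (M (y 0) (M (x 0) (y 1))) (M (M (y 0) (x 0)) (y 1)))"
  have t: "t \<in> loop_terms S M (0, 0)" unfolding t_def
    by (intro loop_terms.ld loop_terms.mul loop_terms.proj1 loop_terms.proj2)
  define a :: "nat \<Rightarrow> 'a \<times> 'a" where "a = (\<lambda>i. (E False, NF 0 False))"
  define b :: "nat \<Rightarrow> 'a \<times> 'a" where "b = (\<lambda>i. (E False, NF u0 False))"
  define c :: "nat \<Rightarrow> 'a \<times> 'a" where "c = (\<lambda>i. if i = 0 then (E True, NF 0 False) else (E False, NF 0 False))"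
  define d :: "nat \<Rightarrow> 'a \<times> 'a" where "d = (\<lambda>i. if i = 0 then (E True, NF 0 False) else (E False, NF v0 False))"
  have al: "(p, q) \<in> induced_cong S M ({0} \<times> UNIV)" if "p \<in> S" "q \<in> S" "fst p = fst q" for p q
    unfolding induced_cong_def using that lcoset_X by auto
  have h: "\<forall>i. a i \<in> S \<and> b i \<in> S \<and> c i \<in> S \<and> d i \<in> S \<and> (a i, b i) \<in> induced_cong S M ({0} \<times> UNIV)
     \<and> (c i, d i) \<in> induced_cong S M ({0} \<times> UNIV)"
    unfolding a_def b_def c_def d_def using al by auto
  have tv: "t (\<lambda>i. (E False, NF v False)) (\<lambda>i. if i = 0 then (E True, NF 0 False) else (E False, NF w False))
     = (E False, NF 0 (Hb v w))" for v w
    unfolding t_def using tval by simp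
  have "t a c = (E False, NF 0 False)" "t a d = (E False, NF 0 False)"
     "t b c = (E False, NF 0 False)" "t b d = (E False, NF 0 True)"
    unfolding a_def b_def c_def d_def tv using H by simp_all
  moreover have "(E False, NF 0 False) \<noteq> (E False, NF 0 True)" unfolding NF_def using e0 by simp
  ultimately show ?thesis using not_abelianI[OF t h] by simp
qed


abbreviation "FW \<equiv> FWbar_car e B"
abbreviation "N1 \<equiv> {0::'a} \<times> B"
abbreviation "N2 \<equiv> {(0::'a, 0::'a)}"

lemma F_add: "i \<in> {0, e} \<Longrightarrow> j \<in> {0, e} \<Longrightarrow> i + j \<in> {0, e}" using ee by auto
lemma F_dbl: "i \<in> {0, e} \<Longrightarrow> i + i = 0" using ee by auto
lemma coset_dbl: "coset B (u + u) = B" using coset_B_iff two by blast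
lemma cadd_B: "cadd B (coset B u) = coset B u" using cadd_coset[of 0 u] coset0 by simp

lemma FW_comm: "is_comm_group FW FWbar_mul (0, B)"
proof (rule comm_groupI)
  show "(0, B) \<in> FW" unfolding FWbar_car_def using B_cosets by blast
next
  fix x y assume "x \<in> FW" "y \<in> FW"
  then obtain i u j v where xy: "x = (i, coset B u)" "y = (j, coset B v)" "i \<in> {0, e}" "j \<in> {0, e}"
    unfolding FWbar_car_def cosets_def by blast
  show "FWbar_mul x y \<in> FW" unfolding xy
    using F_add[OF xy(3,4)] coset_in by (simp add: FWbar_mul_def FWbar_car_def cadd_coset)
  show "FWbar_mul x y = FWbar_mul y x" unfolding xy FWbar_mul_def using cadd_comm by (simp add: add.commute)
next
  fix x assume "x \<in> FW"
  then obtain i u where xy: "x = (i, coset B u)" "i \<in> {0, e}"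
    unfolding FWbar_car_def cosets_def by blast
  show "FWbar_mul (0, B) x = x" unfolding xy FWbar_mul_def using cadd_B by simp
  show "\<exists>y\<in>FW. FWbar_mul x y = (0, B)"
    using xy \<open>x \<in> FW\<close> by (intro bexI[of _ x]) (auto simp: F_dbl FWbar_mul_def cadd_coset coset_dbl)
next
  fix x y z assume "x \<in> FW" "y \<in> FW" "z \<in> FW"
  then obtain i u j v k w where xy: "x = (i, coset B u)" "y = (j, coset B v)" "z = (k, coset B w)"
    unfolding FWbar_car_def cosets_def by blast
  show "FWbar_mul x (FWbar_mul y z) = FWbar_mul (FWbar_mul x y) z"
    unfolding xy FWbar_mul_def by (simp add: cadd_coset algebra_simps)
qed

lemma FW_sq: "\<forall>x\<in>FW. FWbar_mul x x = (0, B)"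
proof
  fix x assume "x \<in> FW"
  then obtain i u where xy: "x = (i, coset B u)" "i \<in> {0, e}"
    unfolding FWbar_car_def cosets_def by blast
  show "FWbar_mul x x = (0, B)" unfolding xy using F_dbl[OF xy(2)] by (simp add: FWbar_mul_def cadd_coset coset_dbl)
qed

lemma Hb_Bsnd: "b \<in> B \<Longrightarrow> Hb v b = False" using Hb_B0 Hb_sym by metis

lemma F2_in_B: "F2mul e x y \<in> B" unfolding F2mul_def using B0 eB by auto

lemma snd_M_coset: "coset B (snd (M (i, u) (j, v))) = coset B (u + v)"
  unfolding Qmul_def using coset_add_B F2_in_B by simp

lemma snd_M: "snd (M (i, u) (j, v)) = u + v + F2mul e j (qlift B qb u) + F2mul e i (hlift B qb u v)"
  unfolding Qmul_def by simp

lemma M_r0: "b \<in> B \<Longrightarrow> M (i, u) (0, b) = (i, u + b)"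
  unfolding Qmul_def F2mul_def hlift_E using e0' Hb_Bsnd by simp

lemma lcoset_N1: "lcoset M (i, u) N1 = {i} \<times> coset B u"
proof -
  have "lcoset M (i, u) N1 = (\<lambda>b. M (i, u) (0, b)) ` B" unfolding lcoset_def by auto
  also have "\<dots> = (\<lambda>b. (i, u + b)) ` B" using M_r0 by (intro image_cong) auto
  also have "\<dots> = {i} \<times> coset B u" unfolding coset_def by auto
  finally show ?thesis .
qed

definition psi1 :: "'a \<times> 'a set \<Rightarrow> ('a \<times> 'a) set" where "psi1 X = {fst X} \<times> snd X"

lemma qcar_N1: "qcar S M N1 = psi1 ` FW"
proof -
  have "qcar S M N1 = (\<lambda>x. psi1 (fst x, coset B (snd x))) ` S"
    unfolding qcar_def psi1_def by (rule image_cong) (metis lcoset_N1 prod.collapse fst_conv snd_conv)+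
  also have "\<dots> = psi1 ` ((\<lambda>x. (fst x, coset B (snd x))) ` S)" by (rule image_image[symmetric])
  also have "(\<lambda>x. (fst x, coset B (snd x))) ` S = FW"
    unfolding FWbar_car_def Qcar_def cosets_def by force
  finally show ?thesis .
qed

lemma coset_mem_eq: assumes "w \<in> coset B u" shows "coset B w = coset B u"
proof -
  obtain b where "b \<in> B" "w = u + b" using assms unfolding coset_def by blast
  then show ?thesis using coset_add_B by simp
qed

lemma coset_ne: "U \<in> cosets B \<Longrightarrow> U \<noteq> {}" using coset_mem by (metis cosetsE empty_iff)

lemma iso1: "iso FW FWbar_mul (qcar S M N1) (qmul M N1) psi1"
proof
  show "bij_betw psi1 FW (qcar S M N1)" unfolding qcar_N1 bij_betw_def inj_on_def
  proof (intro conjI ballI impI refl)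
    fix X Y assume X: "X \<in> FW" and Y: "Y \<in> FW" and eq: "psi1 X = psi1 Y"
    have "snd X \<noteq> {}" "snd Y \<noteq> {}" using X Y coset_ne unfolding FWbar_car_def by auto
    then show "X = Y" using eq unfolding psi1_def by (cases X, cases Y) auto
  qed
next
  fix X Y assume X: "X \<in> FW" and Y: "Y \<in> FW"
  obtain i u j v where xy: "X = (i, coset B u)" "Y = (j, coset B v)"
    using X Y unfolding FWbar_car_def cosets_def by blast
  define p where "p = (SOME a. a \<in> psi1 X)"
  define q where "q = (SOME a. a \<in> psi1 Y)"
  have "p \<in> psi1 X" "q \<in> psi1 Y" unfolding p_def q_def using coset_mem unfolding xy psi1_def
    by (metis (no_types) SigmaI fst_conv singletonI snd_conv someI_ex)+
  then obtain u' v' where pq: "p = (i, u')" "q = (j, v')" "u' \<in> coset B u" "v' \<in> coset B v"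
    unfolding xy psi1_def by auto
  have cu: "coset B u' = coset B u" "coset B v' = coset B v"
    using pq(3,4) coset_mem_eq by auto
  have "qmul M N1 (psi1 X) (psi1 Y) = lcoset M (M p q) N1" unfolding qmul_def p_def q_def ..
  also have "\<dots> = {i + j} \<times> coset B (u' + v')"
    using lcoset_N1[of "fst (M p q)" "snd (M p q)"] snd_M_coset[of i u' j v'] unfolding pq
    by (simp add: Qmul_def)
  also have "\<dots> = psi1 (FWbar_mul X Y)" unfolding psi1_def xy FWbar_mul_def cadd_coset
    using cu by (metis add_diff_cancel_left' cadd_coset coset_eq_iff fst_conv snd_conv)
  finally show "qmul M N1 (psi1 X) (psi1 Y) = psi1 (FWbar_mul X Y)" .
qed

lemma psi1_unit: "psi1 (0, B) = N1" unfolding psi1_def by simp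

lemma quot1_comm: "is_comm_group (qcar S M N1) (qmul M N1) N1"
  using iso.comm_group_tr[OF iso1 FW_comm] psi1_unit by simp

lemma subquot_S_N1: "subquot M S N1 = qcar S M N1" unfolding subquot_def qcar_def ..


lemma N1_S: "N1 \<subseteq> S" unfolding Qcar_def by auto

lemma lcoset_N2: "x \<in> S \<Longrightarrow> lcoset M x N2 = {x}"
  unfolding lcoset_def using loop_ru[OF Q_loop] by simp

lemma qmul_N2: "x \<in> S \<Longrightarrow> y \<in> S \<Longrightarrow> qmul M N2 {x} {y} = {M x y}"
  unfolding qmul_def using lcoset_N2 loop_closed[OF Q_loop] by simp

lemma iso2: "T \<subseteq> S \<Longrightarrow> iso T M ((\<lambda>x. {x}) ` T) (qmul M N2) (\<lambda>x. {x})"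
proof
  assume T: "T \<subseteq> S"
  show "bij_betw (\<lambda>x. {x}) T ((\<lambda>x. {x}) ` T)" by (auto simp: bij_betw_def inj_on_def)
  fix x y assume "x \<in> T" "y \<in> T"
  then show "qmul M N2 {x} {y} = {M x y}" using qmul_N2 T by blast
qed

lemma qcar_N2: "qcar S M N2 = (\<lambda>x. {x}) ` S"
  unfolding qcar_def using lcoset_N2 by (intro image_cong) auto

lemma subquot_N1_N2: "subquot M N1 N2 = (\<lambda>x. {x}) ` N1"
  unfolding subquot_def using lcoset_N2 N1_S by (intro image_cong) auto

lemma quot2_loop: "loop (qcar S M N2) (qmul M N2) N2"
  using iso.loop_tr[OF iso2[OF order_refl] Q_loop] unfolding qcar_N2 by simp

lemma assoc_triv:
  assumes "\<not> (((c \<and> Hb u v) \<noteq> (a \<and> Hb v w)) \<noteq> (b \<and> Hb u w))"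
  shows "M (M (E a, NF u False) (E b, NF v False)) (E c, NF w False)
   = M (E a, NF u False) (M (E b, NF v False) (E c, NF w False))"
proof -
  have P: "M (E a, NF u False) (M (E b, NF v False) (E c, NF w False)) \<in> S" unfolding Qmul_NF by simp
  show ?thesis unfolding assoc_diff using assms loop_ru[OF Q_loop P]
    by (simp only: zero_NF[symmetric])
qed

lemma N1_center: assumes x: "x \<in> N1" shows "x \<in> center S M"
proof -
  obtain b where b: "b \<in> B" "x = (E False, NF b False)" using x by (auto simp: NF_False)
  have xS: "x \<in> S" using x N1_S by blast
  show ?thesis unfolding center_def nucleus_def
  proof (intro CollectI conjI ballI xS)
    fix y z assume "y \<in> S" "z \<in> S"
    then obtain a u c w where yz: "y = (E a, NF u False)" "z = (E c, NF w False)"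
      by (metis Qcar_cases)
    show "M x (M y z) = M (M x y) z"
      unfolding b(2) yz by (rule assoc_triv[symmetric]) (use b in \<open>simp add: Hb_B0 Hb_Bsnd\<close>)
    show "M y (M x z) = M (M y x) z"
      unfolding b(2) yz by (rule assoc_triv[symmetric]) (use b in \<open>simp add: Hb_B0 Hb_Bsnd\<close>)
    show "M y (M z x) = M (M y z) x"
      unfolding b(2) yz by (rule assoc_triv[symmetric]) (use b in \<open>simp add: Hb_B0 Hb_Bsnd\<close>)
  next
    fix y assume "y \<in> S"
    then obtain a u where yz: "y = (E a, NF u False)" by (metis Qcar_cases)
    show "M x y = M y x" unfolding yz b(2) Qmul_NF
      by (rule pair_eq) (use b in \<open>simp_all add: Qb_B0 Hb_Bsnd add.commute\<close>)
  qed
qed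

lemma subquot_N1_center: "subquot M N1 N2 \<subseteq> center (qcar S M N2) (qmul M N2)"
proof
  fix X assume "X \<in> subquot M N1 N2"
  then obtain x where x: "x \<in> N1" "X = {x}" unfolding subquot_N1_N2 by blast
  have "{x} \<in> center ((\<lambda>x. {x}) ` S) (qmul M N2)"
    using iso.center_tr[OF iso2[OF order_refl] Q_loop] N1_center x N1_S by blast
  then show "X \<in> center (qcar S M N2) (qmul M N2)" unfolding qcar_N2 x .
qed

lemma quot2_sub_comm: "is_comm_group (subquot M N1 N2) (qmul M N2) N2"
  using iso.comm_group_tr[OF iso2[OF N1_S] N1_comm] unfolding subquot_N1_N2 by simp

lemma trivial_loop: "loop {()} (\<lambda>_ _. ()) ()" unfolding loop_iff by simp

lemma S_normal: "normal_subloop S M (0, 0) S"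
proof -
  have "loop_hom S M {()} (\<lambda>_ _. ()) (\<lambda>_. ())" unfolding loop_hom_def by simp
  moreover have "(\<lambda>_. ()) ` S = {()}" using Qcar_E by blast
  ultimately have "normal_subloop S M (0, 0) {x\<in>S. (\<lambda>_. ()) x = ()}"
    by (rule normal_subloopI[OF trivial_loop])
  then show ?thesis by simp
qed

lemma N2_normal: "normal_subloop S M (0, 0) N2"
proof -
  have "loop_hom S M S M (\<lambda>x. x)" unfolding loop_hom_def using loop_closed[OF Q_loop] by simp
  moreover have "(\<lambda>x. x) ` S = S" by simp
  ultimately have "normal_subloop S M (0, 0) {x\<in>S. (\<lambda>x. x) x = (0, 0)}"
    by (rule normal_subloopI[OF Q_loop])
  moreover have "{x\<in>S. (\<lambda>x. x) x = (0, 0)} = N2" by auto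
  ultimately show ?thesis by simp
qed

lemma N1_normal: "normal_subloop S M (0, 0) N1"
proof -
  have "loop_hom S M FW FWbar_mul (\<lambda>x. (fst x, coset B (snd x)))"
    unfolding loop_hom_def
  proof (intro conjI ballI)
    fix x assume "x \<in> S"
    then show "(fst x, coset B (snd x)) \<in> FW" unfolding Qcar_def FWbar_car_def using coset_in by auto
  next
    fix x y assume "x \<in> S" "y \<in> S"
    show "(fst (M x y), coset B (snd (M x y))) = FWbar_mul (fst x, coset B (snd x)) (fst y, coset B (snd y))"
      using snd_M_coset[of "fst x" "snd x" "fst y" "snd y"]
      unfolding FWbar_mul_def fst_M by (simp add: cadd_coset)
  qed
  moreover have "(\<lambda>x. (fst x, coset B (snd x))) ` S = FW"
    unfolding FWbar_car_def Qcar_def cosets_def by force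
  ultimately have "normal_subloop S M (0, 0) {x\<in>S. (fst x, coset B (snd x)) = (0, B)}"
    by (rule normal_subloopI[OF comm_loop[OF FW_comm]])
  moreover have "{x\<in>S. (fst x, coset B (snd x)) = (0, B)} = N1"
  proof (rule set_eqI)
    fix x :: "'a \<times> 'a"
    obtain i u where x: "x = (i, u)" by (cases x)
    show "x \<in> {x\<in>S. (fst x, coset B (snd x)) = (0, B)} \<longleftrightarrow> x \<in> N1"
      unfolding x by (auto simp: Qcar_def coset_B_iff)
  qed
  ultimately show ?thesis by simp
qed


definition sel :: "'a set \<Rightarrow> 'a" where "sel U = (if U = B then 0 else SOME x. x \<in> U)"

lemma sel_mem: assumes "U \<in> cosets B" shows "sel U \<in> U"
proof (cases "U = B")
  case True then show ?thesis using B0 by (simp add: sel_def)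
next
  case False
  have "U \<noteq> {}" using coset_ne assms .
  then show ?thesis using False unfolding sel_def by (simp add: some_in_eq)
qed

lemma sel_off: "sel (coset B u) - u \<in> B"
proof -
  have "sel (coset B u) \<in> coset B u" using sel_mem coset_in by blast
  then obtain b where "b \<in> B" "sel (coset B u) = u + b" unfolding coset_def by blast
  then show ?thesis by simp
qed

lemma sel_off2: "u - sel (coset B u) \<in> B" using Bneg'[OF sel_off[of u]] by simp

lemma sel_coset: "U \<in> cosets B \<Longrightarrow> coset B (sel U) = U"
  using sel_mem coset_mem_eq by (metis cosetsE)

lemma sel_B: "sel B = 0" by (simp add: sel_def)

lemma F2_0: "F2mul e x 0 = 0" "F2mul e 0 x = 0" unfolding F2mul_def using e0' by auto

definition theta :: "'a \<times> 'a set \<Rightarrow> 'a \<times> 'a set \<Rightarrow> 'a" where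
  "theta X Y = sel (snd X) + sel (snd Y) - sel (cadd (snd X) (snd Y))
     + F2mul e (fst Y) (qb (snd X)) + F2mul e (fst X) (assoc_bilin qb (snd X) (snd Y))"

definition fiso :: "'a \<times> 'a \<Rightarrow> ('a \<times> 'a set) \<times> 'a" where
  "fiso x = ((fst x, coset B (snd x)), snd x - sel (coset B (snd x)))"

lemma central_ext: "is_central_extension S M B FW FWbar_mul (0, B)"
  unfolding is_central_extension_def
proof (intro conjI exI[of _ theta] exI[of _ fiso])
  show "loop FW FWbar_mul (0, B)" using comm_loop[OF FW_comm] .
  show "is_comm_group B (+) 0" using B_comm .
  show "\<forall>r\<in>FW. theta (0, B) r = 0 \<and> theta r (0, B) = 0"
  proof
    fix r assume "r \<in> FW"
    then obtain i u where r: "r = (i, coset B u)" unfolding FWbar_car_def cosets_def by blast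
    have c1: "cadd B (coset B u) = coset B u" using cadd_B .
    have c2: "cadd (coset B u) B = coset B u" using cadd_B cadd_comm by metis
    show "theta (0, B) r = 0 \<and> theta r (0, B) = 0"
      unfolding r theta_def using c1 c2 by (simp add: sel_B qbB F2_0 assoc_bilin_def)
  qed
  show "\<forall>r\<in>FW. \<forall>s\<in>FW. theta r s \<in> B"
  proof (intro ballI)
    fix r s assume "r \<in> FW" "s \<in> FW"
    then obtain i u j v where r: "r = (i, coset B u)" "s = (j, coset B v)"
      unfolding FWbar_car_def cosets_def by blast
    have "sel (coset B u) + sel (coset B v) - sel (coset B (u + v))
        = (sel (coset B u) - u) + (sel (coset B v) - v) - (sel (coset B (u + v)) - (u + v))"
      by (simp add: algebra_simps)
    also have "\<dots> \<in> B" by (intro Bdiff Badd' sel_off)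
    finally have "sel (coset B u) + sel (coset B v) - sel (coset B (u + v)) \<in> B" .
    then show "theta r s \<in> B" unfolding r theta_def using F2_in_B Badd' by (simp add: cadd_coset)
  qed
  show "loop_iso S M (FW \<times> B) (cext_mul FWbar_mul theta) fiso"
    unfolding loop_iso_def loop_hom_def
  proof (intro conjI ballI)
    fix x assume "x \<in> S"
    then show "fiso x \<in> FW \<times> B" unfolding fiso_def FWbar_car_def Qcar_def
      using coset_in sel_off2 by auto
  next
    fix x y assume "x \<in> S" "y \<in> S"
    obtain i u j v where xy: "x = (i, u)" "y = (j, v)" by (cases x, cases y)
    have cM: "coset B (snd (M x y)) = coset B (u + v)" unfolding xy snd_M_coset ..
    have sM: "snd (M x y) = u + v + F2mul e j (qb (coset B u)) + F2mul e i (assoc_bilin qb (coset B u) (coset B v))"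
      unfolding xy snd_M qlift_def hlift_def ..
    have fM: "fst (M x y) = i + j" unfolding xy fst_M by simp
    have xs: "fst x = i" "snd x = u" "fst y = j" "snd y = v" using xy by simp_all
    show "fiso (M x y) = cext_mul FWbar_mul theta (fiso x) (fiso y)"
      unfolding fiso_def cext_mul_def FWbar_mul_def theta_def cM fM
      unfolding sM xs
      by (simp add: cadd_coset algebra_simps)
  next
    show "bij_betw fiso S (FW \<times> B)" unfolding bij_betw_def
    proof
      show "inj_on fiso S" unfolding inj_on_def fiso_def
        by (auto simp: prod_eq_iff)
      show "fiso ` S = FW \<times> B"
      proof
        show "fiso ` S \<subseteq> FW \<times> B" unfolding fiso_def FWbar_car_def Qcar_def
          using coset_in sel_off2 by auto
        show "FW \<times> B \<subseteq> fiso ` S"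
        proof
          fix p assume "p \<in> FW \<times> B"
          then obtain i U b where p: "p = ((i, U), b)" "i \<in> {0, e}" "U \<in> cosets B" "b \<in> B"
            unfolding FWbar_car_def by auto
          have "coset B (sel U + b) = U" using coset_add_B[OF p(4)] sel_coset[OF p(3)] by simp
          then have "fiso (i, sel U + b) = p" unfolding fiso_def p by simp
          moreover have "(i, sel U + b) \<in> S" using p(2) unfolding Qcar_def by simp
          ultimately show "p \<in> fiso ` S" by blast
        qed
      qed
    qed
  qed
qed

definition Qs :: "nat \<Rightarrow> ('a \<times> 'a) set" where "Qs i = (if i = 0 then S else if i = 1 then N1 else N2)"

lemma Qs_simps: "Qs 0 = S" "Qs (Suc 0) = N1" "Qs 2 = N2" "Qs (Suc (Suc 0)) = N2" by (simp_all add: Qs_def)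

lemma Qs_normal: "\<forall>i\<le>2. normal_subloop S M (0, 0) (Qs i)"
proof (intro allI impI)
  fix i :: nat assume "i \<le> 2"
  then have "i = 0 \<or> i = 1 \<or> i = 2" by arith
  then show "normal_subloop S M (0, 0) (Qs i)"
    using S_normal N1_normal N2_normal by (auto simp: Qs_simps)
qed

lemma less2: "(i::nat) < 2 \<Longrightarrow> i = 0 \<or> i = Suc 0" by arith

lemma N2_N1: "N2 \<subseteq> N1" using B0 by auto

lemma Q_nilpotent: "centrally_nilpotent S M (0, 0)"
  unfolding centrally_nilpotent_def
proof (intro conjI exI[of _ Qs] exI[of _ 2])
  show "loop S M (0, 0)" using Q_loop .
  show "Qs 0 = S" "Qs 2 = {(0, 0)}" by (simp_all add: Qs_simps)
  show "\<forall>i\<le>2. normal_subloop S M (0, 0) (Qs i)" using Qs_normal .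
  show "\<forall>i<2. Qs (Suc i) \<subseteq> Qs i \<and> subquot M (Qs i) (Qs (Suc i)) \<subseteq> center (qcar S M (Qs (Suc i))) (qmul M (Qs (Suc i)))"
  proof (intro allI impI)
    fix i :: nat assume "i < 2"
    then consider "i = 0" | "i = Suc 0" using less2 by blast
    then show "Qs (Suc i) \<subseteq> Qs i \<and> subquot M (Qs i) (Qs (Suc i)) \<subseteq> center (qcar S M (Qs (Suc i))) (qmul M (Qs (Suc i)))"
    proof cases
      case 1
      then show ?thesis using N1_S comm_group_center[OF quot1_comm] subquot_S_N1
        by (simp add: Qs_simps)
    next
      case 2
      then show ?thesis using N2_N1 subquot_N1_center by (simp add: Qs_simps numeral_2_eq_2)
    qed
  qed
qed

lemma Q_cong_solvable: "congruence_solvable S M (0, 0)"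
  unfolding congruence_solvable_def
proof (intro conjI exI[of _ Qs] exI[of _ 2])
  show "loop S M (0, 0)" using Q_loop .
  show "Qs 0 = S" "Qs 2 = {(0, 0)}" by (simp_all add: Qs_simps)
  show "\<forall>i\<le>2. normal_subloop S M (0, 0) (Qs i)" using Qs_normal .
  show "\<forall>i<2. Qs (Suc i) \<subseteq> Qs i \<and> abelian_congruence (qcar S M (Qs (Suc i))) (qmul M (Qs (Suc i))) (Qs (Suc i))
                  (induced_cong (qcar S M (Qs (Suc i))) (qmul M (Qs (Suc i))) (subquot M (Qs i) (Qs (Suc i))))"
  proof (intro allI impI)
    fix i :: nat assume "i < 2"
    then consider "i = 0" | "i = Suc 0" using less2 by blast
    then show "Qs (Suc i) \<subseteq> Qs i \<and> abelian_congruence (qcar S M (Qs (Suc i))) (qmul M (Qs (Suc i))) (Qs (Suc i))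
                  (induced_cong (qcar S M (Qs (Suc i))) (qmul M (Qs (Suc i))) (subquot M (Qs i) (Qs (Suc i))))"
    proof cases
      case 1
      have L: "loop (qcar S M N1) (qmul M N1) N1" using comm_loop[OF quot1_comm] .
      have "abelian_congruence (qcar S M N1) (qmul M N1) N1 (induced_cong (qcar S M N1) (qmul M N1) (qcar S M N1))"
        using central_abelian[OF L _ L] comm_group_center[OF quot1_comm] by simp
      then show ?thesis using 1 N1_S subquot_S_N1 by (simp add: Qs_simps)
    next
      case 2
      have "abelian_congruence (qcar S M N2) (qmul M N2) N2 (induced_cong (qcar S M N2) (qmul M N2) (subquot M N1 N2))"
        using central_abelian[OF quot2_loop subquot_N1_center comm_loop[OF quot2_sub_comm]] .
      then show ?thesis using 2 N2_N1 by (simp add: Qs_simps numeral_2_eq_2)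
    qed
  qed
qed

lemma Q_class_solvable: "classically_solvable S M (0, 0)"
  unfolding classically_solvable_def
proof (intro conjI exI[of _ Qs] exI[of _ 2])
  show "loop S M (0, 0)" using Q_loop .
  show "Qs 0 = S" "Qs 2 = {(0, 0)}" by (simp_all add: Qs_simps)
  show "\<forall>i\<le>2. normal_subloop S M (0, 0) (Qs i)" using Qs_normal .
  show "\<forall>i<2. Qs (Suc i) \<subseteq> Qs i \<and> is_comm_group (subquot M (Qs i) (Qs (Suc i))) (qmul M (Qs (Suc i))) (Qs (Suc i))"
  proof (intro allI impI)
    fix i :: nat assume "i < 2"
    then consider "i = 0" | "i = Suc 0" using less2 by blast
    then show "Qs (Suc i) \<subseteq> Qs i \<and> is_comm_group (subquot M (Qs i) (Qs (Suc i))) (qmul M (Qs (Suc i))) (Qs (Suc i))"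
    proof cases
      case 1
      then show ?thesis using N1_S subquot_S_N1 quot1_comm by (simp add: Qs_simps)
    next
      case 2
      then show ?thesis using N2_N1 quot2_sub_comm by (simp add: Qs_simps numeral_2_eq_2)
    qed
  qed
qed

end


theorem proposition3p1:
  fixes e :: "'a::ab_group_add" and B :: "'a set" and qb :: "'a set \<Rightarrow> 'a"
  assumes B_subgroup: "0 \<in> B" "\<forall>x\<in>B. \<forall>y\<in>B. x + y \<in> B" "\<forall>x\<in>B. - x \<in> B"
    and e_order2: "e \<noteq> 0" "e + e = 0"
    and F_sub_B: "e \<in> B"
    and quotient_elem_abelian_2: "\<forall>u. u + u \<in> B"
    and qform: "is_quadratic_form e B qb"
  shows
    \<comment> \<open>(i)\<close>
    "loop (Qcar e) (Qmul e B qb) (0, 0)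
     \<and> centrally_nilpotent (Qcar e) (Qmul e B qb) (0, 0)
     \<and> is_comm_group (FWbar_car e B) FWbar_mul (0, B)
     \<and> (\<forall>x\<in>FWbar_car e B. FWbar_mul x x = (0, B))
     \<and> is_central_extension (Qcar e) (Qmul e B qb) B (FWbar_car e B) FWbar_mul (0, B)
    \<comment> \<open>(ii)\<close>
     \<and> congruence_solvable (Qcar e) (Qmul e B qb) (0, 0)
     \<and> classically_solvable (Qcar e) (Qmul e B qb) (0, 0)
    \<comment> \<open>(iii)\<close>
     \<and> extra_loop (Qcar e) (Qmul e B qb) (0, 0)
    \<comment> \<open>(iv)\<close>
     \<and> (is_group (Qcar e) (Qmul e B qb) (0, 0) \<longleftrightarrow> is_linear_form e B qb)
    \<comment> \<open>(v)\<close>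
     \<and> normal_subloop (Qcar e) (Qmul e B qb) (0, 0) ({0} \<times> UNIV)
     \<and> is_comm_group ({0} \<times> UNIV) (Qmul e B qb) (0, 0)
    \<comment> \<open>(vi)\<close>
     \<and> (\<not> is_group (Qcar e) (Qmul e B qb) (0, 0) \<longrightarrow>
          \<not> abelian_congruence (Qcar e) (Qmul e B qb) (0, 0)
               (induced_cong (Qcar e) (Qmul e B qb) ({0} \<times> UNIV)))"
proof -
  interpret qs e B qb
    using assms by unfold_locales
  show ?thesis
    using Q_loop Q_nilpotent FW_comm FW_sq central_ext Q_cong_solvable Q_class_solvable
      Q_extra group_iff_linear X_normal X_comm not_abelian_X
    by blast
qed


end
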